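(* Consider the nonautonomous TASEP with $n$ sites, rate functions $\lambda_0,\dots,\lambda_n$ and associated NRDS $\phi$ on $X=\{0,1\}^n$, and let $A(t,\omega):=\bigcap_{t_0\le t}\phi(t,t_0,X,\omega)$. (a) Assume there exist $R>r>0$ such that for each $t\in\mathbb{R}$ there is $t_0<t$ such that the $n+1$ Poisson processes have joint $(r,R,m)$-bounded rates on $[t_0,t)$ with $m=n(n+1)/2$. Then the sets $A(t,\omega)$ define a global random pullback attractor, and $A(t,\omega)$ is a singleton for all $t\in\mathbb{R}$ and almost all $\omega\in\Omega$. (b) If, moreover, there exist $R>r>0$ and $\Delta t>0$ such that the processes have joint $(r,R,m)$-bounded rates with $m=n(n+1)/2$ on every interval $[\tau,\tau+\Delta t)$, $\tau\in\mathbb{R}$, then the $A(t,\omega)$ also provide a global random forward attractor, and $\lim_{t_0\to-\infty}\mathbb{P}(\Gamma(t,t_0))=1$ holds with an exponential rate for every $t$, where $\Gamma(t,t_0):=\{\omega\mid\phi(t,t_0,x_1,\omega)=\phi(t,t_0,x_2,\omega)\ \forall x_1,x_2\in X\}$.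
   Context: Nonautonomous TASEP: $n$ sites; locally integrable rate functions $\lambda_k:\mathbb{R}\to[0,\infty)$, $k=0,\dots,n$ ($0$ = entry, $n$ = exit), with $\int_0^t\lambda_k\to\pm\infty$ as $t\to\pm\infty$; to each $k$ an independent non-homogeneous Poisson process on $\mathbb{R}$ with rate $\lambda_k$ (its points mapped by $M_k(t)=\int_0^t\lambda_k$ form a homogeneous rate-1 Poisson process on $\mathbb{R}$), on a product probability space $(\Omega,\mathcal{F},\mathbb{P})$. Almost surely all points are distinct without accumulation; ordering them yields jump times $t_i(\omega)$, $i\in\mathbb{Z}$, and sites $k_i(\omega)\in\{0,\dots,n\}$. State $x=(s_1,\dots,s_n)\in\{0,1\}^n$. Jump map: $f(x,0)=(1,s_2,\dots,s_n)$; $f(x,n)=(s_1,\dots,s_{n-1},0)$; for $0<k<n$ with $s_k=1,s_{k+1}=0$, $f(x,k)$ sets $s_k=0,s_{k+1}=1$; otherwise $f(x,k)=x$. $\phi(t,t_0,x,\omega)$ results from $x$ by applying $f(\cdot,k_i(\omega))$ for all $i$ with $t_i(\omega)\in[t_0,t)$ in increasing order of $i$. Joint $(r,R,m)$-bounded rates on $[\tau_1,\tau_2)$: there exist $\tau_1=q_0<\dots<q_m=\tau_2$ with $r\le\int_{q_i}^{q_{i+1}}\lambda_k\le R$ for all $i<m$, $k=0,\dots,n$. With discrete metric $d$ on $X$ and $\mathrm{dist}(A_1,A_2)=\sup_{a\in A_1}\inf_{b\in A_2}d(a,b)$: a family $A(t,\omega)$ of compact sets (measurable as subsets of $X\times\Omega$),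 strictly invariant ($\phi(t,t_0,A(t_0,\omega),\omega)=A(t,\omega)$ for $t\ge t_0$ a.s.), is a global random pullback attractor if $\lim_{t_0\to-\infty}\mathrm{dist}(\phi(t,t_0,X,\omega),A(t,\omega))=0$ a.s. for each $t$, and a global random forward attractor if $\lim_{t\to\infty}\mathrm{dist}(\phi(t,t_0,X,\omega),A(t,\omega))=0$ a.s. for each $t_0$. *)

theory Defs
  imports "HOL-Probability.Probability"
begin

(* State space X = {0,1}^n, a state (s_1,...,s_n) is a bool list of length n;
   site s_k is stored at list index k-1. *)
definition stateX :: "nat \<Rightarrow> bool list set" where
  "stateX n = {x. length x = n}"

(* jump map f(x,k); k = 0 entry, k = n exit *)
definition jump :: "nat \<Rightarrow> bool list \<Rightarrow> nat \<Rightarrow> bool list" where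
  "jump n x k =
     (if k = 0 then x[0 := True]
      else if k = n then x[n - 1 := False]
      else if k < n \<and> x ! (k - 1) \<and> \<not> x ! k then x[k - 1 := False, k := True]
      else x)"

(* Ordered list of the site labels of all jumps in [t0,t):
   jump times in increasing order (ties, a null event, broken by site index). *)
definition jump_seq :: "nat \<Rightarrow> (nat \<Rightarrow> 'w \<Rightarrow> real set) \<Rightarrow> 'w \<Rightarrow> real \<Rightarrow> real \<Rightarrow> nat list" where
  "jump_seq n N \<omega> t0 t =
     concat (map (\<lambda>s. filter (\<lambda>k. s \<in> N k \<omega>) [0..<Suc n])
       (sorted_list_of_set (\<Union>k\<in>{..n}. N k \<omega> \<inter> {t0..<t})))"

definition phi :: "nat \<Rightarrow> (nat \<Rightarrow> 'w \<Rightarrow> real set) \<Rightarrow> real \<Rightarrow> real \<Rightarrow> bool list \<Rightarrow> 'w \<Rightarrow> bool list" where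
  "phi n N t t0 x \<omega> = fold (\<lambda>k y. jump n y k) (jump_seq n N \<omega> t0 t) x"

definition pb_set :: "nat \<Rightarrow> (nat \<Rightarrow> 'w \<Rightarrow> real set) \<Rightarrow> real \<Rightarrow> 'w \<Rightarrow> bool list set" where
  "pb_set n N t \<omega> = (\<Inter>t0\<in>{..t}. (\<lambda>x. phi n N t t0 x \<omega>) ` stateX n)"

definition Gamma :: "'w measure \<Rightarrow> nat \<Rightarrow> (nat \<Rightarrow> 'w \<Rightarrow> real set) \<Rightarrow> real \<Rightarrow> real \<Rightarrow> 'w set" where
  "Gamma M n N t t0 = {\<omega> \<in> space M. \<forall>x1\<in>stateX n. \<forall>x2\<in>stateX n.
       phi n N t t0 x1 \<omega> = phi n N t t0 x2 \<omega>}"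

definition admissible_rates :: "nat \<Rightarrow> (nat \<Rightarrow> real \<Rightarrow> real) \<Rightarrow> bool" where
  "admissible_rates n lam \<longleftrightarrow> (\<forall>k\<le>n.
      (\<forall>t. 0 \<le> lam k t) \<and> (\<forall>a b. lam k integrable_on {a..b}) \<and>
      filterlim (\<lambda>t. integral {0..t} (lam k)) at_top at_top \<and>
      filterlim (\<lambda>t. integral {t..0} (lam k)) at_top at_bot)"

definition poisson_law :: "real \<Rightarrow> nat pmf" where
  "poisson_law mu = (if mu = 0 then return_pmf 0 else poisson_pmf mu)"

(* N k omega is the point set of the k-th process; these are independent
   non-homogeneous Poisson processes on R with rates lam k, k = 0..n. *)
definition indep_poisson_procs ::
  "'w measure \<Rightarrow> nat \<Rightarrow> (nat \<Rightarrow> real \<Rightarrow> real) \<Rightarrow> (nat \<Rightarrow> 'w \<Rightarrow> real set) \<Rightarrow> bool" where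
  "indep_poisson_procs M n lam N \<longleftrightarrow>
     prob_space M \<and>
     (\<forall>k\<le>n. \<forall>\<omega>. \<forall>a b. finite (N k \<omega> \<inter> {a..b})) \<and>
     (\<forall>k\<le>n. \<forall>a b. a \<le> b \<longrightarrow>
        (\<lambda>\<omega>. card (N k \<omega> \<inter> {a..<b})) \<in> measurable M (count_space UNIV) \<and>
        distr M (count_space UNIV) (\<lambda>\<omega>. card (N k \<omega> \<inter> {a..<b}))
          = measure_pmf (poisson_law (integral {a..b} (lam k)))) \<and>
     (\<forall>(I::nat set) kk aa bb. finite I \<and> (\<forall>i\<in>I. kk i \<le> n \<and> aa i \<le> bb i) \<and>
        (\<forall>i\<in>I. \<forall>j\<in>I. i \<noteq> j \<longrightarrow> kk i \<noteq> kk j \<or> {aa i..<bb i} \<inter> {aa j..<bb j} = {})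
        \<longrightarrow> prob_space.indep_vars M (\<lambda>_. count_space UNIV)
              (\<lambda>i \<omega>. card (N (kk i) \<omega> \<inter> {aa i..<bb i})) I)"

definition joint_bounded_rates ::
  "nat \<Rightarrow> (nat \<Rightarrow> real \<Rightarrow> real) \<Rightarrow> real \<Rightarrow> real \<Rightarrow> nat \<Rightarrow> real \<Rightarrow> real \<Rightarrow> bool" where
  "joint_bounded_rates n lam r R m \<tau>1 \<tau>2 \<longleftrightarrow>
     (\<exists>q::nat \<Rightarrow> real. q 0 = \<tau>1 \<and> q m = \<tau>2 \<and> (\<forall>i<m. q i < q (Suc i)) \<and>
        (\<forall>i<m. \<forall>k\<le>n. r \<le> integral {q i..q (Suc i)} (lam k) \<and>
                        integral {q i..q (Suc i)} (lam k) \<le> R))"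

definition hdist :: "'a set \<Rightarrow> 'a set \<Rightarrow> ereal" where
  "hdist A1 A2 = (SUP a\<in>A1. INF b\<in>A2. if a = b then 0 else 1)"

definition random_invariant_family ::
  "'x set \<Rightarrow> (real \<Rightarrow> real \<Rightarrow> 'x \<Rightarrow> 'w \<Rightarrow> 'x) \<Rightarrow> 'w measure \<Rightarrow> (real \<Rightarrow> 'w \<Rightarrow> 'x set) \<Rightarrow> bool" where
  "random_invariant_family X \<phi> M A \<longleftrightarrow>
     (\<forall>t \<omega>. A t \<omega> \<subseteq> X \<and> compactin (discrete_topology X) (A t \<omega>)) \<and>
     (\<forall>t. {(x, \<omega>). x \<in> X \<and> \<omega> \<in> space M \<and> x \<in> A t \<omega>} \<in> sets (count_space X \<Otimes>\<^sub>M M)) \<and>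
     (\<forall>t0 t. t0 \<le> t \<longrightarrow> (AE \<omega> in M. (\<lambda>x. \<phi> t t0 x \<omega>) ` A t0 \<omega> = A t \<omega>))"

definition global_pullback_attractor ::
  "'x set \<Rightarrow> (real \<Rightarrow> real \<Rightarrow> 'x \<Rightarrow> 'w \<Rightarrow> 'x) \<Rightarrow> 'w measure \<Rightarrow> (real \<Rightarrow> 'w \<Rightarrow> 'x set) \<Rightarrow> bool" where
  "global_pullback_attractor X \<phi> M A \<longleftrightarrow> random_invariant_family X \<phi> M A \<and>
     (\<forall>t. AE \<omega> in M. ((\<lambda>t0. hdist ((\<lambda>x. \<phi> t t0 x \<omega>) ` X) (A t \<omega>)) \<longlongrightarrow> 0) at_bot)"

definition global_forward_attractor ::
  "'x set \<Rightarrow> (real \<Rightarrow> real \<Rightarrow> 'x \<Rightarrow> 'w \<Rightarrow> 'x) \<Rightarrow> 'w measure \<Rightarrow> (real \<Rightarrow> 'w \<Rightarrow> 'x set) \<Rightarrow> bool" where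
  "global_forward_attractor X \<phi> M A \<longleftrightarrow> random_invariant_family X \<phi> M A \<and>
     (\<forall>t0. AE \<omega> in M. ((\<lambda>t. hdist ((\<lambda>x. \<phi> t t0 x \<omega>) ` X) (A t \<omega>)) \<longlongrightarrow> 0) at_top)"

end

theory Submission
  imports Defs "HOL-Library.Nat_Bijection"
begin


lemma length_jump[simp]: "length (jump n x k) = length x"
  by (simp add: jump_def)

lemma length_fold_jump[simp]: "length (fold (\<lambda>k y. jump n y k) ks x) = length x"
  by (induction ks arbitrary: x) auto

lemma length_phi[simp]: "length (phi n N t t0 x \<omega>) = length x"
  by (simp add: phi_def)

lemma jump_idem: "jump n (jump n x k) k = jump n x k"
  by (cases "k < length x") (auto simp: jump_def nth_list_update list_update_beyond)

lemma sorted_list_of_set_append: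
  assumes "finite A" "finite B" "\<forall>a\<in>A. \<forall>b\<in>B. a < (b::real)"
  shows "sorted_list_of_set (A \<union> B) = sorted_list_of_set A @ sorted_list_of_set B"
proof -
  let ?l = "sorted_list_of_set A @ sorted_list_of_set B"
  have s: "sorted ?l" using assms by (auto simp: sorted_append less_imp_le)
  have d: "distinct ?l" using assms by fastforce
  have e: "set ?l = A \<union> B" using assms by auto
  have "sorted_list_of_set (set ?l) = ?l"
    by (simp only: sorted_list_of_set_sort_remdups distinct_remdups_id[OF d] sorted_sort_id[OF s])
  then show ?thesis unfolding e .
qed

definition locfin :: "nat \<Rightarrow> (nat \<Rightarrow> 'w \<Rightarrow> real set) \<Rightarrow> 'w \<Rightarrow> bool" where
  "locfin n N \<omega> \<longleftrightarrow> (\<forall>k\<le>n. \<forall>a b. finite (N k \<omega> \<inter> {a..b}))"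

lemma locfinD: "locfin n N \<omega> \<Longrightarrow> k \<le> n \<Longrightarrow> finite (N k \<omega> \<inter> {a..<b})"
  unfolding locfin_def by (auto intro: finite_subset[of _ "N k \<omega> \<inter> {a..b}"])

lemma finU:
  assumes fin: "locfin n N \<omega>"
  shows "finite (\<Union>k\<in>{..n}. N k \<omega> \<inter> {a..<b})"
  using locfinD[OF fin] by (intro finite_UN_I) auto

lemma jump_seq_split:
  assumes fin: "locfin n N \<omega>"
    and "a \<le> b" "b \<le> c"
  shows "jump_seq n N \<omega> a c = jump_seq n N \<omega> a b @ jump_seq n N \<omega> b c"
proof -
  have U: "(\<Union>k\<in>{..n}. N k \<omega> \<inter> {a..<c}) = (\<Union>k\<in>{..n}. N k \<omega> \<inter> {a..<b}) \<union> (\<Union>k\<in>{..n}. N k \<omega> \<inter> {b..<c})"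
    using assms by auto
  show ?thesis unfolding jump_seq_def U
    by (subst sorted_list_of_set_append) (use finU[OF fin] in auto)
qed

lemma phi_cocycle:
  assumes fin: "locfin n N \<omega>"
    and "a \<le> b" "b \<le> c"
  shows "phi n N c a x \<omega> = phi n N c b (phi n N b a x \<omega>) \<omega>"
  unfolding phi_def using jump_seq_split[OF fin assms(2,3)] by simp

lemma jump_seq_empty:
  assumes "b \<le> a"
  shows "jump_seq n N \<omega> a b = []"
  using assms unfolding jump_seq_def by simp

lemma filter_upt_single:
  assumes "k0 < m"
  shows "filter (\<lambda>k. k = k0) [0..<m] = [k0]"
  using assms
proof (induction m)
  case 0 then show ?case by simp
next
  case (Suc m)
  show ?case
  proof (cases "k0 < m")
    case True with Suc show ?thesis by simp
  next
    case False
    then have "k0 = m" using Suc by simp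
    then show ?thesis by (simp add: filter_False)
  qed
qed

lemma jump_seq_single:
  assumes fin: "locfin n N \<omega>"
    and single: "\<And>k k' u v. k \<le> n \<Longrightarrow> k' \<le> n \<Longrightarrow> u \<in> N k \<omega> \<inter> {a..<b} \<Longrightarrow> v \<in> N k' \<omega> \<inter> {a..<b} \<Longrightarrow> u = v"
  shows "jump_seq n N \<omega> a b = filter (\<lambda>k. N k \<omega> \<inter> {a..<b} \<noteq> {}) [0..<Suc n]"
proof (cases "(\<Union>k\<in>{..n}. N k \<omega> \<inter> {a..<b}) = {}")
  case True
  have "\<forall>k\<in>set [0..<Suc n]. \<not> (N k \<omega> \<inter> {a..<b} \<noteq> {})"
  proof
    fix k assume "k \<in> set [0..<Suc n]"
    then have "k \<le> n" by auto
    then show "\<not> (N k \<omega> \<inter> {a..<b} \<noteq> {})" using True by blast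
  qed
  then have "filter (\<lambda>k. N k \<omega> \<inter> {a..<b} \<noteq> {}) [0..<Suc n] = []"
    by (simp only: filter_False)
  with True show ?thesis unfolding jump_seq_def by simp
next
  case False
  then obtain k1 where "k1 \<le> n" "N k1 \<omega> \<inter> {a..<b} \<noteq> {}" by blast
  then obtain s where s: "k1 \<le> n" "s \<in> N k1 \<omega> \<inter> {a..<b}" by blast
  have U: "(\<Union>k\<in>{..n}. N k \<omega> \<inter> {a..<b}) = {s}"
    using single[OF s(1) _ s(2)] s by blast
  have "filter (\<lambda>k. s \<in> N k \<omega>) [0..<Suc n] = filter (\<lambda>k. N k \<omega> \<inter> {a..<b} \<noteq> {}) [0..<Suc n]"
  proof (rule filter_cong[OF refl])
    fix k assume "k \<in> set [0..<Suc n]"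
    then have k: "k \<le> n" by auto
    show "(s \<in> N k \<omega>) = (N k \<omega> \<inter> {a..<b} \<noteq> {})"
      using single[OF k s(1) _ s(2)] s(2) by blast
  qed
  then show ?thesis unfolding jump_seq_def U by simp
qed

lemma fold_jump_replicate:
  "fold (\<lambda>k y. jump n y k) (replicate c k0) (jump n x k0) = jump n x k0"
  by (induction c) (simp_all add: jump_idem)

lemma jump_seq_only:
  assumes fin: "locfin n N \<omega>"
    and k0: "k0 \<le> n"
    and others: "\<And>k. k \<le> n \<Longrightarrow> k \<noteq> k0 \<Longrightarrow> N k \<omega> \<inter> {a..<b} = {}"
    and ne: "N k0 \<omega> \<inter> {a..<b} \<noteq> {}"
  shows "fold (\<lambda>k y. jump n y k) (jump_seq n N \<omega> a b) x = jump n x k0"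
proof -
  let ?U = "\<Union>k\<in>{..n}. N k \<omega> \<inter> {a..<b}"
  let ?sl = "sorted_list_of_set ?U"
  have finu: "finite ?U" by (rule finU[OF fin])
  have "map (\<lambda>s. filter (\<lambda>k. s \<in> N k \<omega>) [0..<Suc n]) ?sl = map (\<lambda>s. [k0]) ?sl"
  proof (rule map_cong[OF refl])
    fix s assume "s \<in> set ?sl"
    then have s: "s \<in> ?U" using finu by simp
    have "filter (\<lambda>k. s \<in> N k \<omega>) [0..<Suc n] = filter (\<lambda>k. k = k0) [0..<Suc n]"
    proof (rule filter_cong[OF refl])
      fix k assume "k \<in> set [0..<Suc n]"
      then have k: "k \<le> n" by auto
      have s0: "s \<in> N k0 \<omega>" using s others by blast
      show "(s \<in> N k \<omega>) = (k = k0)"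
        using s s0 others[OF k] by (cases "k = k0") auto
    qed
    also have "\<dots> = [k0]" using k0 by (simp add: filter_upt_single)
    finally show "filter (\<lambda>k. s \<in> N k \<omega>) [0..<Suc n] = [k0]" .
  qed
  then have js: "jump_seq n N \<omega> a b = replicate (length ?sl) k0"
    unfolding jump_seq_def by (simp add: concat_map_singleton map_replicate_const)
  have "?U \<noteq> {}" using ne k0 by auto
  then have "length ?sl \<noteq> 0" using finu by simp
  then obtain c where "length ?sl = Suc c" by (cases "length ?sl") auto
  then show ?thesis unfolding js using fold_jump_replicate by simp
qed


fun sq :: "nat \<Rightarrow> nat list" where
  "sq 0 = []" | "sq (Suc j) = [0..<Suc j] @ sq j"

lemma length_sq: "length (sq j) = j * (j + 1) div 2"
  by (induction j) auto

lemma set_sq: "k \<in> set (sq j) \<Longrightarrow> k < j"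
  by (induction j) auto

lemma round_step:
  assumes "length x = n" "j < n" "k \<le> j"
  shows "fold (\<lambda>k y. jump n y k) [0..<Suc k] x ! k \<and>
         (\<forall>i. k < i \<longrightarrow> fold (\<lambda>k y. jump n y k) [0..<Suc k] x ! i = x ! i)"
  using assms(3)
proof (induction k)
  case 0
  then show ?case using assms by (simp add: jump_def nth_list_update)
next
  case (Suc k)
  let ?y = "fold (\<lambda>k y. jump n y k) [0..<Suc k] x"
  have IH: "?y ! k" "\<forall>i. k < i \<longrightarrow> ?y ! i = x ! i" using Suc by auto
  have ly: "length ?y = n" using assms by simp
  have sk: "Suc k < n" using Suc assms by simp
  have eq: "fold (\<lambda>k y. jump n y k) [0..<Suc (Suc k)] x = jump n ?y (Suc k)" by simp
  show ?case
  proof (cases "?y ! Suc k")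
    case True
    then have "jump n ?y (Suc k) = ?y" using sk by (simp add: jump_def)
    then show ?thesis unfolding eq using True IH by auto
  next
    case False
    then have "jump n ?y (Suc k) = ?y[k := False, Suc k := True]" using sk IH by (simp add: jump_def)
    then show ?thesis unfolding eq using False IH ly sk by (auto simp: nth_list_update)
  qed
qed

lemma sq_sync:
  assumes "length x = n" "j \<le> n" "\<forall>i. j \<le> i \<longrightarrow> i < n \<longrightarrow> x ! i"
  shows "fold (\<lambda>k y. jump n y k) (sq j) x = replicate n True"
  using assms
proof (induction j arbitrary: x)
  case 0
  then show ?case by (simp add: list_eq_iff_nth_eq)
next
  case (Suc j)
  let ?y = "fold (\<lambda>k y. jump n y k) [0..<Suc j] x"
  have r: "?y ! j" "\<forall>i. j < i \<longrightarrow> ?y ! i = x ! i"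
    using round_step[of x n j j] Suc.prems by auto
  have all: "\<forall>i. j \<le> i \<longrightarrow> i < n \<longrightarrow> ?y ! i"
  proof (intro allI impI)
    fix i assume "j \<le> i" "i < n"
    then consider "i = j" | "Suc j \<le> i" by linarith
    then show "?y ! i"
    proof cases
      case 1 then show ?thesis using r by simp
    next
      case 2 then show ?thesis using r(2) Suc.prems \<open>i < n\<close> by auto
    qed
  qed
  have "fold (\<lambda>k y. jump n y k) (sq j) ?y = replicate n True"
    using Suc.prems all by (intro Suc.IH) auto
  then show ?case by simp
qed

lemma mono_q:
  assumes "\<forall>i<m. q i < q (Suc i)" "i \<le> j" "j \<le> m"
  shows "(q i :: real) \<le> q j"
  using assms(2,3)
proof (induction j)
  case 0 then show ?case by simp
next
  case (Suc j)
  show ?case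
  proof (cases "i = Suc j")
    case False
    then have "q i \<le> q j" using Suc by simp
    also have "q j \<le> q (Suc j)" using assms(1) Suc by (simp add: less_imp_le)
    finally show ?thesis .
  qed simp
qed

lemma block_phi:
  assumes fin: "locfin n N \<omega>"
    and q: "\<forall>i<length L. q i < q (Suc i)"
    and Ln: "\<forall>i<length L. L ! i \<le> n"
    and succ: "\<forall>i<length L. \<forall>k\<le>n. (N k \<omega> \<inter> {q i..<q (Suc i)} \<noteq> {}) \<longleftrightarrow> k = L ! i"
    and "i \<le> length L"
  shows "phi n N (q i) (q 0) x \<omega> = fold (\<lambda>k y. jump n y k) (take i L) x"
  using assms(5)
proof (induction i)
  case 0
  then show ?case by (simp add: phi_def jump_seq_empty)
next
  case (Suc i)
  have il: "i < length L" using Suc by simp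
  have "phi n N (q (Suc i)) (q 0) x \<omega> = phi n N (q (Suc i)) (q i) (phi n N (q i) (q 0) x \<omega>) \<omega>"
    by (rule phi_cocycle[OF fin]) (use mono_q[OF q] il in auto)
  also have "\<dots> = jump n (phi n N (q i) (q 0) x \<omega>) (L ! i)"
    unfolding phi_def[of n N "q (Suc i)"]
    by (rule jump_seq_only[OF fin]) (use Ln succ il in auto)
  also have "\<dots> = fold (\<lambda>k y. jump n y k) (take (Suc i) L) x"
    using Suc il by (simp add: take_Suc_conv_app_nth)
  finally show ?case .
qed

lemma block_sync:
  assumes fin: "locfin n N \<omega>"
    and m: "m = n * (n + 1) div 2"
    and q: "\<forall>i<m. q i < q (Suc i)"
    and succ: "\<forall>i<m. \<forall>k\<le>n. (N k \<omega> \<inter> {q i..<q (Suc i)} \<noteq> {}) \<longleftrightarrow> k = sq n ! i"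
    and x: "length x = n"
  shows "phi n N (q m) (q 0) x \<omega> = replicate n True"
proof -
  have len: "length (sq n) = m" using m length_sq by simp
  have Ln: "\<forall>i<length (sq n). sq n ! i \<le> n"
    using set_sq nth_mem by (metis less_imp_le)
  have "phi n N (q m) (q 0) x \<omega> = fold (\<lambda>k y. jump n y k) (take m (sq n)) x"
    using block_phi[OF fin _ Ln, of q m x] q succ len by simp
  also have "\<dots> = replicate n True" using len sq_sync[of x n n] x by simp
  finally show ?thesis .
qed


definition measN :: "'w measure \<Rightarrow> nat \<Rightarrow> (nat \<Rightarrow> 'w \<Rightarrow> real set) \<Rightarrow> bool" where
  "measN M n N \<longleftrightarrow> (\<forall>k\<le>n. \<forall>a b. Measurable.pred M (\<lambda>\<omega>. N k \<omega> \<inter> {a..<b} \<noteq> {}))"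

lemma meas_filter:
  assumes "\<And>k. Measurable.pred M (P k)"
  shows "(\<lambda>\<omega>. filter (\<lambda>k. P k \<omega>) ks) \<in> measurable M (count_space UNIV)"
proof (induction ks)
  case Nil then show ?case by simp
next
  case (Cons k ks)
  have c: "(\<lambda>\<omega>. k # filter (\<lambda>k. P k \<omega>) ks) \<in> measurable M (count_space UNIV)"
    by (rule measurable_compose[OF Cons, of "\<lambda>l. k # l"]) simp
  have "{\<omega> \<in> space M. P k \<omega>} \<in> sets M" using assms[of k] by (simp add: pred_def)
  then have "(\<lambda>\<omega>. if P k \<omega> then k # filter (\<lambda>k. P k \<omega>) ks else filter (\<lambda>k. P k \<omega>) ks)
     \<in> measurable M (count_space UNIV)"
    by (intro measurable_If c Cons)
  then show ?case by simp
qed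

lemma meas_append:
  assumes "(f :: 'w \<Rightarrow> 'a::countable list) \<in> measurable M (count_space UNIV)"
    "g \<in> measurable M (count_space UNIV)"
  shows "(\<lambda>\<omega>. f \<omega> @ g \<omega>) \<in> measurable M (count_space UNIV)"
proof -
  have "(\<lambda>\<omega>. (\<lambda>l \<omega>. l @ g \<omega>) (f \<omega>) \<omega>) \<in> measurable M (count_space UNIV)"
  proof (rule measurable_compose_countable[OF _ assms(1)])
    fix l :: "'a list"
    show "(\<lambda>\<omega>. l @ g \<omega>) \<in> measurable M (count_space UNIV)"
      by (rule measurable_compose[OF assms(2), of "\<lambda>x. l @ x"]) simp
  qed
  then show ?thesis by simp
qed

lemma meas_concat_map:
  assumes "\<And>j. (F j :: 'w \<Rightarrow> 'a::countable list) \<in> measurable M (count_space UNIV)"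
  shows "(\<lambda>\<omega>. concat (map (\<lambda>j. F j \<omega>) js)) \<in> measurable M (count_space UNIV)"
proof (induction js)
  case Nil then show ?case by simp
next
  case (Cons j js)
  then show ?case using meas_append[OF assms[of j] Cons] by simp
qed

definition pts :: "real \<Rightarrow> real \<Rightarrow> nat \<Rightarrow> nat \<Rightarrow> real" where
  "pts t0 t L j = t0 + real j * ((t - t0) / real (Suc L))"

definition aseq :: "nat \<Rightarrow> (nat \<Rightarrow> 'w \<Rightarrow> real set) \<Rightarrow> real \<Rightarrow> real \<Rightarrow> nat \<Rightarrow> 'w \<Rightarrow> nat list" where
  "aseq n N t0 t L \<omega> = concat (map (\<lambda>j. filter (\<lambda>k. N k \<omega> \<inter> {pts t0 t L j..<pts t0 t L (Suc j)} \<noteq> {}) [0..<Suc n]) [0..<Suc L])"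

lemma aseq_meas:
  assumes "measN M n N"
  shows "aseq n N t0 t L \<in> measurable M (count_space UNIV)"
proof -
  have "(\<lambda>\<omega>. concat (map (\<lambda>j. (\<lambda>\<omega>. filter (\<lambda>k. (\<lambda>k \<omega>. k \<le> n \<and> N k \<omega> \<inter> {pts t0 t L j..<pts t0 t L (Suc j)} \<noteq> {}) k \<omega>) [0..<Suc n]) \<omega>) [0..<Suc L]))
     \<in> measurable M (count_space UNIV)"
  proof (rule meas_concat_map, rule meas_filter)
    fix j k
    show "Measurable.pred M (\<lambda>\<omega>. k \<le> n \<and> N k \<omega> \<inter> {pts t0 t L j..<pts t0 t L (Suc j)} \<noteq> {})"
      using assms unfolding measN_def by (cases "k \<le> n") auto
  qed
  moreover have "\<And>\<omega>. concat (map (\<lambda>j. (\<lambda>\<omega>. filter (\<lambda>k. (\<lambda>k \<omega>. k \<le> n \<and> N k \<omega> \<inter> {pts t0 t L j..<pts t0 t L (Suc j)} \<noteq> {}) k \<omega>) [0..<Suc n]) \<omega>) [0..<Suc L])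
     = aseq n N t0 t L \<omega>"
    unfolding aseq_def by (intro arg_cong[where f=concat] map_cong filter_cong) auto
  ultimately show ?thesis by simp
qed

lemma pts_mono:
  assumes "t0 \<le> t" "i \<le> j"
  shows "pts t0 t L i \<le> pts t0 t L j"
  using assms unfolding pts_def by (intro add_left_mono mult_right_mono) auto

lemma pts_0[simp]: "pts t0 t L 0 = t0" and pts_end[simp]: "pts t0 t L (Suc L) = t"
  unfolding pts_def by auto

lemma jump_seq_pieces:
  assumes fin: "locfin n N \<omega>" and "t0 \<le> t"
  shows "jump_seq n N \<omega> t0 (pts t0 t L J) = concat (map (\<lambda>j. jump_seq n N \<omega> (pts t0 t L j) (pts t0 t L (Suc j))) [0..<J])"
proof (induction J)
  case 0
  then show ?case by (simp add: jump_seq_empty)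
next
  case (Suc J)
  have "jump_seq n N \<omega> t0 (pts t0 t L (Suc J)) = jump_seq n N \<omega> t0 (pts t0 t L J) @ jump_seq n N \<omega> (pts t0 t L J) (pts t0 t L (Suc J))"
    using jump_seq_split[OF fin, of t0 "pts t0 t L J" "pts t0 t L (Suc J)"] pts_mono[OF assms(2), of 0 J L] pts_mono[OF assms(2), of J "Suc J" L]
    by simp
  then show ?case using Suc by simp
qed

lemma finite_sep:
  assumes "finite (U :: real set)"
  shows "\<exists>\<delta>>0. \<forall>u\<in>U. \<forall>v\<in>U. u \<noteq> v \<longrightarrow> \<delta> \<le> \<bar>u - v\<bar>"
proof -
  let ?D = "(\<lambda>(u, v). \<bar>u - v\<bar>) ` {p \<in> U \<times> U. fst p \<noteq> snd p}"
  have fD: "finite ?D" using assms by auto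
  show ?thesis
  proof (cases "?D = {}")
    case True
    then show ?thesis by (intro exI[of _ 1]) auto
  next
    case False
    have pos: "Min ?D > 0" using fD False by (subst Min_gr_iff) auto
    show ?thesis
    proof (intro exI[of _ "Min ?D"] conjI pos ballI impI)
      fix u v assume "u \<in> U" "v \<in> U" "u \<noteq> v"
      then have "\<bar>u - v\<bar> \<in> ?D" by force
      then show "Min ?D \<le> \<bar>u - v\<bar>" using fD by simp
    qed
  qed
qed

lemma jump_seq_eventually_aseq:
  assumes fin: "locfin n N \<omega>" and lt: "t0 < t"
  shows "\<exists>L0. \<forall>L\<ge>L0. jump_seq n N \<omega> t0 t = aseq n N t0 t L \<omega>"
proof -
  let ?U = "\<Union>k\<in>{..n}. N k \<omega> \<inter> {t0..<t}"
  obtain \<delta> where d: "\<delta> > 0" "\<forall>u\<in>?U. \<forall>v\<in>?U. u \<noteq> v \<longrightarrow> \<delta> \<le> \<bar>u - v\<bar>"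
    using finite_sep[OF finU[OF fin]] by blast
  obtain L0 :: nat where L0: "(t - t0) / \<delta> < real L0" using reals_Archimedean2 by blast
  show ?thesis
  proof (intro exI allI impI)
    fix L assume "L0 \<le> L"
    then have "(t - t0) / \<delta> < real (Suc L)" using L0 by simp
    then have hd: "(t - t0) / real (Suc L) < \<delta>" using d(1)
      by (simp add: field_simps)
    have "jump_seq n N \<omega> t0 t = jump_seq n N \<omega> t0 (pts t0 t L (Suc L))" by simp
    also have "\<dots> = concat (map (\<lambda>j. jump_seq n N \<omega> (pts t0 t L j) (pts t0 t L (Suc j))) [0..<Suc L])"
      by (rule jump_seq_pieces[OF fin]) (use lt in simp)
    also have "\<dots> = aseq n N t0 t L \<omega>"
      unfolding aseq_def
    proof (intro arg_cong[where f=concat] map_cong refl jump_seq_single[OF fin])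
      fix j k k' u v
      assume j: "j \<in> set [0..<Suc L]" and k: "k \<le> n" "k' \<le> n"
        and u: "u \<in> N k \<omega> \<inter> {pts t0 t L j..<pts t0 t L (Suc j)}"
        and v: "v \<in> N k' \<omega> \<inter> {pts t0 t L j..<pts t0 t L (Suc j)}"
      have "t0 \<le> pts t0 t L j" using pts_mono[of t0 t 0 j L] lt by simp
      moreover have "pts t0 t L (Suc j) \<le> t" using pts_mono[of t0 t "Suc j" "Suc L" L] lt j by auto
      ultimately have uv: "u \<in> ?U" "v \<in> ?U" using u v k by auto
      have "pts t0 t L (Suc j) - pts t0 t L j = (t - t0) / real (Suc L)"
        unfolding pts_def by (simp add: algebra_simps add_divide_distrib[symmetric])
      then have "\<bar>u - v\<bar> < \<delta>" using u v hd by auto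
      then show "u = v" using d(2) uv by force
    qed
    finally show "jump_seq n N \<omega> t0 t = aseq n N t0 t L \<omega>" .
  qed
qed

lemma jump_seq_meas:
  assumes fin: "\<And>\<omega>. locfin n N \<omega>" and meas: "measN M n N"
  shows "(\<lambda>\<omega>. jump_seq n N \<omega> t0 t) \<in> measurable M (count_space UNIV)"
proof (cases "t0 < t")
  case False
  then show ?thesis by (simp add: jump_seq_empty)
next
  case True
  have "Measurable.pred M (\<lambda>\<omega>. \<exists>L0::nat. \<forall>L. L0 \<le> L \<longrightarrow> aseq n N t0 t L \<omega> = y)" for y
    using aseq_meas[OF meas] by measurable
  moreover have "(\<exists>L0::nat. \<forall>L. L0 \<le> L \<longrightarrow> aseq n N t0 t L \<omega> = y) \<longleftrightarrow> jump_seq n N \<omega> t0 t = y" for \<omega> y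
  proof
    assume "\<exists>L0. \<forall>L\<ge>L0. aseq n N t0 t L \<omega> = y"
    then obtain L1 where L1: "\<forall>L\<ge>L1. aseq n N t0 t L \<omega> = y" by blast
    obtain L0 where L0: "\<forall>L\<ge>L0. jump_seq n N \<omega> t0 t = aseq n N t0 t L \<omega>"
      using jump_seq_eventually_aseq[OF fin True] by blast
    show "jump_seq n N \<omega> t0 t = y" using L0 L1 by (metis max.cobounded1 max.cobounded2)
  next
    assume "jump_seq n N \<omega> t0 t = y"
    then show "\<exists>L0. \<forall>L\<ge>L0. aseq n N t0 t L \<omega> = y"
      using jump_seq_eventually_aseq[OF fin True] by metis
  qed
  ultimately have pr: "Measurable.pred M (\<lambda>\<omega>. jump_seq n N \<omega> t0 t = y)" for y by simp
  show ?thesis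
    unfolding measurable_count_space_eq2_countable
  proof (intro conjI ballI)
    fix y
    have "{\<omega>\<in>space M. jump_seq n N \<omega> t0 t = y} \<in> sets M" using pr[of y] by (simp add: pred_def)
    moreover have "(\<lambda>\<omega>. jump_seq n N \<omega> t0 t) -` {y} \<inter> space M = {\<omega>\<in>space M. jump_seq n N \<omega> t0 t = y}" by auto
    ultimately show "(\<lambda>\<omega>. jump_seq n N \<omega> t0 t) -` {y} \<inter> space M \<in> sets M" by simp
  qed simp
qed

lemma phi_meas:
  assumes fin: "\<And>\<omega>. locfin n N \<omega>" and meas: "measN M n N"
  shows "(\<lambda>\<omega>. phi n N t t0 x \<omega>) \<in> measurable M (count_space UNIV)"
  unfolding phi_def
  by (rule measurable_compose[OF jump_seq_meas[OF fin meas], of "\<lambda>l. fold (\<lambda>k y. jump n y k) l x"]) simp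


lemma finite_stateX: "finite (stateX n)"
  using finite_lists_length_eq[of "UNIV :: bool set" n] unfolding stateX_def by simp

lemma stateX_ne: "replicate n False \<in> stateX n"
  unfolding stateX_def by simp

lemma phi_stateX: "x \<in> stateX n \<Longrightarrow> phi n N t t0 x \<omega> \<in> stateX n"
  unfolding stateX_def by simp

lemma rat_below:
  assumes fin: "locfin n N \<omega>"
  shows "\<exists>q\<in>\<rat>. q \<le> t0 \<and> (\<forall>k\<le>n. N k \<omega> \<inter> {q..<t0} = {})"
proof -
  let ?S = "\<Union>k\<in>{..n}. N k \<omega> \<inter> {t0-1..<t0}"
  have fS: "finite ?S" by (rule finU[OF fin])
  define b where "b = (if ?S = {} then t0 - 1 else max (t0 - 1) (Max ?S))"
  have "b < t0" using fS unfolding b_def by (auto simp: Max_less_iff)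
  then obtain q where q: "q \<in> \<rat>" "b < q" "q < t0" using Rats_dense_in_real by blast
  have "N k \<omega> \<inter> {q..<t0} = {}" if k: "k \<le> n" for k
  proof (rule ccontr)
    assume "N k \<omega> \<inter> {q..<t0} \<noteq> {}"
    then obtain u where u: "u \<in> N k \<omega>" "q \<le> u" "u < t0" by auto
    have "t0 - 1 < q" using q(2) unfolding b_def by (auto split: if_splits)
    then have uS: "u \<in> ?S" using u k by auto
    then have "u \<le> Max ?S" using fS by simp
    moreover have "Max ?S \<le> b" using uS unfolding b_def by auto
    ultimately show False using u q by simp
  qed
  then show ?thesis using q by (intro bexI[of _ q]) auto
qed

lemma pb_set_rat:
  assumes fin: "locfin n N \<omega>"
  shows "x \<in> pb_set n N t \<omega> \<longleftrightarrow> (\<forall>r::rat. of_rat r \<le> t \<longrightarrow> (\<exists>y\<in>stateX n. phi n N t (of_rat r) y \<omega> = x))"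
proof
  assume "x \<in> pb_set n N t \<omega>"
  then show "\<forall>r::rat. of_rat r \<le> t \<longrightarrow> (\<exists>y\<in>stateX n. phi n N t (of_rat r) y \<omega> = x)"
    unfolding pb_set_def by auto
next
  assume R: "\<forall>r::rat. of_rat r \<le> t \<longrightarrow> (\<exists>y\<in>stateX n. phi n N t (of_rat r) y \<omega> = x)"
  show "x \<in> pb_set n N t \<omega>"
    unfolding pb_set_def
  proof (intro INT_I)
    fix t0 assume t0: "t0 \<in> {..t}"
    obtain q where q: "q \<in> \<rat>" "q \<le> t0" "\<forall>k\<le>n. N k \<omega> \<inter> {q..<t0} = {}"
      using rat_below[OF fin] by blast
    obtain r where r: "q = of_rat r" using q(1) Rats_cases by blast
    have "of_rat r \<le> t" using r q(2) t0 by simp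
    then obtain y where y: "y \<in> stateX n" "phi n N t q y \<omega> = x" using R r by blast
    have js: "jump_seq n N \<omega> q t0 = []"
      unfolding jump_seq_def using q(3) by simp
    have "phi n N t q y \<omega> = phi n N t t0 (phi n N t0 q y \<omega>) \<omega>"
      by (rule phi_cocycle[OF fin]) (use q t0 in auto)
    also have "phi n N t0 q y \<omega> = y" unfolding phi_def js by simp
    finally show "x \<in> (\<lambda>x. phi n N t t0 x \<omega>) ` stateX n" using y by auto
  qed
qed

lemma pb_set_meas:
  assumes fin: "\<And>\<omega>. locfin n N \<omega>" and meas: "measN M n N"
  shows "{\<omega> \<in> space M. x \<in> pb_set n N t \<omega>} \<in> sets M"
proof -
  note [measurable] = phi_meas[OF fin meas]
  have "Measurable.pred M (\<lambda>\<omega>. \<forall>r::rat. of_rat r \<le> t \<longrightarrow> (\<exists>y\<in>stateX n. phi n N t (of_rat r) y \<omega> = x))"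
    by measurable
  then show ?thesis using pb_set_rat[OF fin] by (simp add: pred_def)
qed

lemma Gamma_meas:
  assumes fin: "\<And>\<omega>. locfin n N \<omega>" and meas: "measN M n N"
  shows "Gamma M n N t t0 \<in> sets M"
proof -
  note [measurable] = phi_meas[OF fin meas]
  have "Measurable.pred M (\<lambda>\<omega>. \<forall>x1\<in>stateX n. \<forall>x2\<in>stateX n. phi n N t t0 x1 \<omega> = phi n N t t0 x2 \<omega>)"
    by measurable
  then show ?thesis unfolding Gamma_def by (simp add: pred_def)
qed


context prob_space
begin

lemma rect_event:
  fixes X :: "nat \<Rightarrow> 'a \<Rightarrow> nat"
  assumes ind: "indep_vars (\<lambda>_. count_space UNIV) X I" and J: "J \<subseteq> I"
  shows "{\<omega> \<in> space M. \<forall>j\<in>J. X j \<omega> \<in> A j} \<in> events"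
proof -
  have rv: "X j \<in> measurable M (count_space UNIV)" if "j \<in> I" for j
    using ind that unfolding indep_vars_def2 by simp
  have "{\<omega> \<in> space M. X j \<omega> \<in> A j} \<in> events" if "j \<in> J" for j
  proof -
    have "X j -` A j \<inter> space M \<in> events"
      by (rule measurable_sets[OF rv]) (use that J in auto)
    moreover have "X j -` A j \<inter> space M = {\<omega> \<in> space M. X j \<omega> \<in> A j}" by blast
    ultimately show ?thesis by simp
  qed
  then show ?thesis
    by (intro sets.sets_Collect_countable_All') (simp_all add: countableI_type)
qed

lemma indep_rect:
  fixes X :: "nat \<Rightarrow> 'a \<Rightarrow> nat"
  assumes ind: "indep_vars (\<lambda>_. count_space UNIV) X I" and J: "J \<subseteq> I" "finite J"
  shows "prob {\<omega> \<in> space M. \<forall>j\<in>J. X j \<omega> \<in> A j} = (\<Prod>j\<in>J. prob {\<omega> \<in> space M. X j \<omega> \<in> A j})"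
proof (cases "J = {}")
  case True
  then show ?thesis by (simp add: prob_space)
next
  case False
  have isets: "indep_sets (\<lambda>i. {X i -` A \<inter> space M | A. A \<in> sets (count_space UNIV)}) I"
    using ind unfolding indep_vars_def2 by (rule conjunct2)
  have "prob (\<Inter>j\<in>J. X j -` A j \<inter> space M) = (\<Prod>j\<in>J. prob (X j -` A j \<inter> space M))"
  proof (rule indep_setsD[OF isets J(1) False J(2)], intro ballI CollectI)
    fix j
    show "\<exists>A'. X j -` A j \<inter> space M = X j -` A' \<inter> space M \<and> A' \<in> sets (count_space UNIV)"
      by (intro exI[of _ "A j"]) simp
  qed
  moreover have "(\<Inter>j\<in>J. X j -` A j \<inter> space M) = {\<omega> \<in> space M. \<forall>j\<in>J. X j \<omega> \<in> A j}"
    using False by blast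
  moreover have "\<And>j. X j -` A j \<inter> space M = {\<omega> \<in> space M. X j \<omega> \<in> A j}" by blast
  ultimately show ?thesis by simp
qed

lemma indep_blocks:
  fixes X :: "nat \<Rightarrow> 'a \<Rightarrow> nat"
  assumes ind: "indep_vars (\<lambda>_. count_space UNIV) X I"
    and B: "finite B"
  shows "\<forall>J0. J0 \<subseteq> I \<longrightarrow> finite J0 \<longrightarrow> (\<forall>b\<in>B. J b \<subseteq> I \<and> finite (J b) \<and> J b \<inter> J0 = {}) \<longrightarrow>
    (\<forall>b\<in>B. \<forall>b'\<in>B. b \<noteq> b' \<longrightarrow> J b \<inter> J b' = {}) \<longrightarrow>
    prob {\<omega> \<in> space M. (\<forall>j\<in>J0. X j \<omega> \<in> A j) \<and> (\<forall>b\<in>B. \<not> (\<forall>j\<in>J b. X j \<omega> \<in> A j))}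
    = prob {\<omega> \<in> space M. \<forall>j\<in>J0. X j \<omega> \<in> A j} * (\<Prod>b\<in>B. (1 - prob {\<omega> \<in> space M. \<forall>j\<in>J b. X j \<omega> \<in> A j}))"
  using B
proof (induction B rule: finite_induct)
  case empty
  then show ?case by simp
next
  case (insert b B)
  let ?R = "\<lambda>S. {\<omega> \<in> space M. \<forall>j\<in>S. X j \<omega> \<in> A j}"
  let ?T = "\<lambda>S. {\<omega> \<in> space M. (\<forall>j\<in>S. X j \<omega> \<in> A j) \<and> (\<forall>b\<in>B. \<not> (\<forall>j\<in>J b. X j \<omega> \<in> A j))}"
  show ?case
  proof (intro allI impI)
    fix J0 assume J0: "J0 \<subseteq> I" "finite J0"
      and JB: "\<forall>b'\<in>insert b B. J b' \<subseteq> I \<and> finite (J b') \<and> J b' \<inter> J0 = {}"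
      and dis: "\<forall>b1\<in>insert b B. \<forall>b'\<in>insert b B. b1 \<noteq> b' \<longrightarrow> J b1 \<inter> J b' = {}"
    have Jb: "J b \<subseteq> I" "finite (J b)" "J b \<inter> J0 = {}" using JB by auto
    have disB: "\<forall>b'\<in>B. \<forall>b''\<in>B. b' \<noteq> b'' \<longrightarrow> J b' \<inter> J b'' = {}" using dis by blast
    have JBB: "\<forall>b'\<in>B. J b' \<subseteq> I \<and> finite (J b')" using JB by blast
    have disJ: "\<forall>b'\<in>B. J b' \<inter> J b = {}"
    proof
      fix b' assume b': "b' \<in> B"
      then have "b' \<noteq> b" using insert(2) by auto
      then show "J b' \<inter> J b = {}" using dis b' by simp
    qed
    have JB0: "\<forall>b'\<in>B. J b' \<subseteq> I \<and> finite (J b') \<and> J b' \<inter> J0 = {}" using JB by simp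
    have IH0: "prob (?T J0) = prob (?R J0) * (\<Prod>b\<in>B. (1 - prob (?R (J b))))"
      by (rule insert.IH[THEN spec[of _ J0], THEN mp, THEN mp, THEN mp, THEN mp, OF J0(1) J0(2) JB0 disB])
    have IH1: "prob (?T (J0 \<union> J b)) = prob (?R (J0 \<union> J b)) * (\<Prod>b\<in>B. (1 - prob (?R (J b))))"
    proof -
      have a: "J0 \<union> J b \<subseteq> I" "finite (J0 \<union> J b)" using J0 Jb by auto
      have c: "\<forall>b'\<in>B. J b' \<subseteq> I \<and> finite (J b') \<and> J b' \<inter> (J0 \<union> J b) = {}"
        using JB0 disJ by (simp add: Int_Un_distrib)
      show ?thesis by (rule insert.IH[THEN spec[of _ "J0 \<union> J b"], THEN mp, THEN mp, THEN mp, THEN mp, OF a c disB])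
    qed
    have TB: "?T S \<in> events" if S: "S \<subseteq> I" for S
    proof -
      have eq: "?T S = ?R S \<inter> {\<omega> \<in> space M. \<forall>b\<in>B. \<omega> \<notin> ?R (J b)}" by blast
      have "{\<omega> \<in> space M. \<forall>b\<in>B. \<omega> \<notin> ?R (J b)} \<in> events"
      proof (rule sets.sets_Collect_countable_All')
        fix b' assume "b' \<in> B"
        then have "J b' \<subseteq> I" using JBB by simp
        then have "?R (J b') \<in> events" by (rule rect_event[OF ind])
        then have "space M - ?R (J b') \<in> events" by (rule sets.compl_sets)
        moreover have "{\<omega> \<in> space M. \<omega> \<notin> ?R (J b')} = space M - ?R (J b')" by blast
        ultimately show "{\<omega> \<in> space M. \<omega> \<notin> ?R (J b')} \<in> events" by simp
      qed (rule countable_finite[OF insert(1)])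
      then show ?thesis unfolding eq using rect_event[OF ind S] by (rule sets.Int[rotated])
    qed
    have eq1: "{\<omega> \<in> space M. (\<forall>j\<in>J0. X j \<omega> \<in> A j) \<and> (\<forall>b'\<in>insert b B. \<not> (\<forall>j\<in>J b'. X j \<omega> \<in> A j))}
       = ?T J0 - ?T (J0 \<union> J b)" by blast
    have sub: "?T (J0 \<union> J b) \<subseteq> ?T J0" by blast
    have "prob (?T J0 - ?T (J0 \<union> J b)) = prob (?T J0) - prob (?T (J0 \<union> J b))"
      by (rule finite_measure_Diff[OF TB TB sub]) (use J0 Jb in auto)
    also have "prob (?R (J0 \<union> J b)) = prob (?R J0) * prob (?R (J b))"
    proof -
      have "prob (?R (J0 \<union> J b)) = (\<Prod>j\<in>J0 \<union> J b. prob {\<omega> \<in> space M. X j \<omega> \<in> A j})"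
        using J0 Jb by (intro indep_rect[OF ind]) auto
      also have "\<dots> = (\<Prod>j\<in>J0. prob {\<omega> \<in> space M. X j \<omega> \<in> A j}) * (\<Prod>j\<in>J b. prob {\<omega> \<in> space M. X j \<omega> \<in> A j})"
        using J0 Jb by (intro prod.union_disjoint) auto
      also have "\<dots> = prob (?R J0) * prob (?R (J b))"
        using J0 Jb by (simp add: indep_rect[OF ind])
      finally show ?thesis .
    qed
    then have "prob (?T (J0 \<union> J b)) = prob (?R J0) * prob (?R (J b)) * (\<Prod>b\<in>B. (1 - prob (?R (J b))))"
      using IH1 by simp
    finally have "prob (?T J0 - ?T (J0 \<union> J b)) = prob (?R J0) * ((1 - prob (?R (J b))) * (\<Prod>b\<in>B. (1 - prob (?R (J b)))))"
      using IH0 by (simp add: algebra_simps)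
    then show "prob {\<omega> \<in> space M. (\<forall>j\<in>J0. X j \<omega> \<in> A j) \<and> (\<forall>b'\<in>insert b B. \<not> (\<forall>j\<in>J b'. X j \<omega> \<in> A j))}
      = prob (?R J0) * (\<Prod>b'\<in>insert b B. (1 - prob (?R (J b'))))"
      unfolding eq1 using insert(1,2) by simp
  qed
qed

lemma indep_blocks_bound:
  fixes X :: "nat \<Rightarrow> 'a \<Rightarrow> nat"
  assumes ind: "indep_vars (\<lambda>_. count_space UNIV) X I"
    and JB: "\<forall>b<K. J b \<subseteq> I \<and> finite (J b)"
    and dis: "\<forall>b<K. \<forall>b'<K. b \<noteq> b' \<longrightarrow> J b \<inter> J b' = {}"
    and p: "\<forall>b<K. p \<le> prob {\<omega> \<in> space M. \<forall>j\<in>J b. X j \<omega> \<in> A j}"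
  shows "prob {\<omega> \<in> space M. \<forall>b<K. \<not> (\<forall>j\<in>J b. X j \<omega> \<in> A j)} \<le> (1 - p) ^ K"
proof -
  have "prob {\<omega> \<in> space M. (\<forall>j\<in>{}. X j \<omega> \<in> A j) \<and> (\<forall>b\<in>{..<K}. \<not> (\<forall>j\<in>J b. X j \<omega> \<in> A j))}
    = prob {\<omega> \<in> space M. \<forall>j\<in>{}. X j \<omega> \<in> A j} * (\<Prod>b\<in>{..<K}. (1 - prob {\<omega> \<in> space M. \<forall>j\<in>J b. X j \<omega> \<in> A j}))"
    using indep_blocks[OF ind finite_lessThan[of K], rule_format, of "{}"] JB dis by simp
  moreover have "{\<omega> \<in> space M. (\<forall>j\<in>{}. X j \<omega> \<in> A j) \<and> (\<forall>b\<in>{..<K}. \<not> (\<forall>j\<in>J b. X j \<omega> \<in> A j))}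
     = {\<omega> \<in> space M. \<forall>b<K. \<not> (\<forall>j\<in>J b. X j \<omega> \<in> A j)}" by auto
  ultimately have "prob {\<omega> \<in> space M. \<forall>b<K. \<not> (\<forall>j\<in>J b. X j \<omega> \<in> A j)} = (\<Prod>b\<in>{..<K}. (1 - prob {\<omega> \<in> space M. \<forall>j\<in>J b. X j \<omega> \<in> A j}))"
    by (simp add: prob_space)
  also have "\<dots> \<le> (\<Prod>b\<in>{..<K}. (1 - p))"
    using p by (intro prod_mono) auto
  finally show ?thesis by simp
qed

end


lemma procs_parts:
  assumes procs: "indep_poisson_procs M n lam N"
  shows "prob_space M"
    and "\<forall>k\<le>n. \<forall>\<omega>. \<forall>a b. finite (N k \<omega> \<inter> {a..b})"
    and "\<forall>k\<le>n. \<forall>a b. a \<le> b \<longrightarrow>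
        (\<lambda>\<omega>. card (N k \<omega> \<inter> {a..<b})) \<in> measurable M (count_space UNIV) \<and>
        distr M (count_space UNIV) (\<lambda>\<omega>. card (N k \<omega> \<inter> {a..<b}))
          = measure_pmf (poisson_law (integral {a..b} (lam k)))"
    and "\<forall>(I::nat set) kk aa bb. finite I \<and> (\<forall>i\<in>I. kk i \<le> n \<and> aa i \<le> bb i) \<and>
        (\<forall>i\<in>I. \<forall>j\<in>I. i \<noteq> j \<longrightarrow> kk i \<noteq> kk j \<or> {aa i..<bb i} \<inter> {aa j..<bb j} = {})
        \<longrightarrow> prob_space.indep_vars M (\<lambda>_. count_space UNIV)
              (\<lambda>i \<omega>. card (N (kk i) \<omega> \<inter> {aa i..<bb i})) I"
  using procs unfolding indep_poisson_procs_def
  by (rule conjunct1, rule conjunct2[THEN conjunct1], rule conjunct2[THEN conjunct2, THEN conjunct1],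
      rule conjunct2[THEN conjunct2, THEN conjunct2])

lemma procs_basic:
  assumes procs: "indep_poisson_procs M n lam N"
  shows "prob_space M" "locfin n N \<omega>" "measN M n N"
proof -
  note P = procs_parts[OF procs]
  show "prob_space M" by (rule P(1))
  show "locfin n N \<omega>" using P(2) unfolding locfin_def by simp
  show "measN M n N"
    unfolding measN_def
  proof (intro allI impI)
    fix k a b assume k: "k \<le> n"
    show "Measurable.pred M (\<lambda>\<omega>. N k \<omega> \<inter> {a..<b} \<noteq> {})"
    proof (cases "a \<le> b")
      case False
      then show ?thesis by simp
    next
      case True
      have m: "(\<lambda>\<omega>. card (N k \<omega> \<inter> {a..<b})) \<in> measurable M (count_space UNIV)"
        using P(3)[rule_format, OF k True] by (rule conjunct1)
      have fin: "finite (N k \<omega> \<inter> {a..<b})" for \<omega>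
      proof -
        have "finite (N k \<omega> \<inter> {a..b})" using P(2) k by simp
        then show ?thesis by (rule finite_subset[rotated]) auto
      qed
      have "Measurable.pred M (\<lambda>\<omega>. card (N k \<omega> \<inter> {a..<b}) \<noteq> 0)"
        using m by measurable
      moreover have "\<And>\<omega>. (card (N k \<omega> \<inter> {a..<b}) \<noteq> 0) = (N k \<omega> \<inter> {a..<b} \<noteq> {})"
        using fin by simp
      ultimately show ?thesis by simp
    qed
  qed
qed

lemma procs_prob:
  assumes procs: "indep_poisson_procs M n lam N" and k: "k \<le> n" and ab: "a \<le> b"
  shows "measure M {\<omega> \<in> space M. card (N k \<omega> \<inter> {a..<b}) \<in> S}
        = measure_pmf.prob (poisson_law (integral {a..b} (lam k))) S"
proof -
  note P = procs_parts(3)[OF procs, rule_format, OF k ab]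
  have m: "(\<lambda>\<omega>. card (N k \<omega> \<inter> {a..<b})) \<in> measurable M (count_space UNIV)"
    using P by (rule conjunct1)
  have d: "distr M (count_space UNIV) (\<lambda>\<omega>. card (N k \<omega> \<inter> {a..<b}))
          = measure_pmf (poisson_law (integral {a..b} (lam k)))"
    using P by (rule conjunct2)
  have "measure_pmf.prob (poisson_law (integral {a..b} (lam k))) S
      = measure (distr M (count_space UNIV) (\<lambda>\<omega>. card (N k \<omega> \<inter> {a..<b}))) S"
    unfolding d ..
  also have "\<dots> = measure M ((\<lambda>\<omega>. card (N k \<omega> \<inter> {a..<b})) -` S \<inter> space M)"
    by (rule measure_distr[OF m]) simp
  also have "(\<lambda>\<omega>. card (N k \<omega> \<inter> {a..<b})) -` S \<inter> space M = {\<omega> \<in> space M. card (N k \<omega> \<inter> {a..<b}) \<in> S}"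
    by blast
  finally show ?thesis by simp
qed

lemma poisson_zero:
  assumes "0 < (mu::real)"
  shows "measure_pmf.prob (poisson_law mu) {0} = exp (- mu)"
  using assms by (simp add: poisson_law_def measure_pmf_single)

lemma poisson_pos:
  assumes "0 < (mu::real)"
  shows "measure_pmf.prob (poisson_law mu) {c. 0 < c} = 1 - exp (- mu)"
proof -
  have "{c::nat. 0 < c} = UNIV - {0}" by auto
  then have "measure_pmf.prob (poisson_law mu) {c. 0 < c} = measure_pmf.prob (poisson_law mu) (space (measure_pmf (poisson_law mu)) - {0})"
    by simp
  also have "\<dots> = 1 - measure_pmf.prob (poisson_law mu) {0}"
    by (rule measure_pmf.prob_compl) simp
  finally show ?thesis using poisson_zero[OF assms] by simp
qed

definition enc :: "nat \<Rightarrow> nat \<Rightarrow> nat \<Rightarrow> nat" where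
  "enc b i k = prod_encode (b, prod_encode (i, k))"
definition db :: "nat \<Rightarrow> nat" where "db j = fst (prod_decode j)"
definition di :: "nat \<Rightarrow> nat" where "di j = fst (prod_decode (snd (prod_decode j)))"
definition dk :: "nat \<Rightarrow> nat" where "dk j = snd (prod_decode (snd (prod_decode j)))"

lemma dec_enc[simp]: "db (enc b i k) = b" "di (enc b i k) = i" "dk (enc b i k) = k"
  unfolding enc_def db_def di_def dk_def by (simp_all add: prod_encode_inverse)

lemma enc_eq[simp]: "enc b i k = enc b' i' k' \<longleftrightarrow> b = b' \<and> i = i' \<and> k = k'"
  unfolding enc_def by simp

definition succ :: "nat \<Rightarrow> (nat \<Rightarrow> 'w \<Rightarrow> real set) \<Rightarrow> nat list \<Rightarrow> (nat \<Rightarrow> nat \<Rightarrow> real) \<Rightarrow> nat \<Rightarrow> 'w \<Rightarrow> bool" where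
  "succ n N L Q b \<omega> \<longleftrightarrow> (\<forall>i<length L. \<forall>k\<le>n. (N k \<omega> \<inter> {Q b i..<Q b (Suc i)} \<noteq> {}) \<longleftrightarrow> k = L ! i)"

lemma ivl_disj: "b1 \<le> a2 \<or> b2 \<le> a1 \<Longrightarrow> {a1..<b1} \<inter> {a2..<(b2::real)} = {}"
  by auto


lemma block_bound:
  assumes procs: "indep_poisson_procs M n lam N"
    and r: "0 < r"
    and Lm: "length L = m" and Ln: "\<forall>i<m. L ! i \<le> n"
    and Qm: "\<forall>b<K. \<forall>i<m. Q b i < Q b (Suc i)"
    and Qr: "\<forall>b<K. \<forall>i<m. \<forall>k\<le>n. r \<le> integral {Q b i..Q b (Suc i)} (lam k) \<and> integral {Q b i..Q b (Suc i)} (lam k) \<le> R"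
    and Qd: "\<forall>b<K. \<forall>b'<K. b \<noteq> b' \<longrightarrow> Q b m \<le> Q b' 0 \<or> Q b' m \<le> Q b 0"
  shows "{\<omega>\<in>space M. \<forall>b<K. \<not> succ n N L Q b \<omega>} \<in> sets M \<and>
         measure M {\<omega>\<in>space M. \<forall>b<K. \<not> succ n N L Q b \<omega>} \<le> (1 - (min (1 - exp (-r)) (exp (-R))) ^ (m * Suc n)) ^ K"
proof -
  interpret prob_space M using procs_basic(1)[OF procs] .
  define a0 where "a0 = min (1 - exp (-r)) (exp (-R))"
  have a0: "0 \<le> a0" unfolding a0_def using r by auto
  define kk where "kk j = dk j" for j
  define aa where "aa j = Q (db j) (di j)" for j
  define bb where "bb j = Q (db j) (Suc (di j))" for j
  define X where "X j \<omega> = card (N (kk j) \<omega> \<inter> {aa j..<bb j})" for j \<omega>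
  define A where "A j = (if dk j = L ! di j then {c::nat. 0 < c} else {0})" for j
  define J where "J b = (\<lambda>(i, k). enc b i k) ` ({..<m} \<times> {..n})" for b
  define I where "I = (\<Union>b<K. J b)"
  have finJ: "finite (J b)" for b unfolding J_def by simp
  have finI: "finite I" unfolding I_def using finJ by simp
  have memI: "j \<in> I \<longleftrightarrow> (\<exists>b<K. \<exists>i<m. \<exists>k\<le>n. j = enc b i k)" for j
    unfolding I_def J_def by auto
  have Iprops: "\<forall>j\<in>I. kk j \<le> n \<and> aa j \<le> bb j"
  proof
    fix j assume "j \<in> I"
    then obtain b i k where "b < K" "i < m" "k \<le> n" "j = enc b i k" using memI by blast
    then show "kk j \<le> n \<and> aa j \<le> bb j" unfolding kk_def aa_def bb_def using Qm by (simp add: less_imp_le)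
  qed
  have Idis: "\<forall>j\<in>I. \<forall>j'\<in>I. j \<noteq> j' \<longrightarrow> kk j \<noteq> kk j' \<or> {aa j..<bb j} \<inter> {aa j'..<bb j'} = {}"
  proof (intro ballI impI)
    fix j j' assume "j \<in> I" "j' \<in> I" "j \<noteq> j'"
    then obtain b i k b' i' k' where bik: "b < K" "i < m" "k \<le> n" "j = enc b i k"
      and bik': "b' < K" "i' < m" "k' \<le> n" "j' = enc b' i' k'" using memI by metis
    have nq: "\<not> (b = b' \<and> i = i' \<and> k = k')" using bik bik' \<open>j \<noteq> j'\<close> by auto
    show "kk j \<noteq> kk j' \<or> {aa j..<bb j} \<inter> {aa j'..<bb j'} = {}"
    proof (cases "b = b'")
      case True
      show ?thesis
      proof (cases "i = i'")
        case True
        then have "k \<noteq> k'" using nq \<open>b = b'\<close> by simp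
        then show ?thesis unfolding kk_def using bik bik' by simp
      next
        case False
        have Qb: "\<forall>i<m. Q b i < Q b (Suc i)" using Qm bik by simp
        have "Q b (Suc i) \<le> Q b i' \<or> Q b (Suc i') \<le> Q b i"
        proof (cases "i < i'")
          case True then show ?thesis using mono_q[OF Qb, of "Suc i" i'] bik' by simp
        next
          case False then have "i' < i" using \<open>i \<noteq> i'\<close> by simp
          then show ?thesis using mono_q[OF Qb, of "Suc i'" i] bik by simp
        qed
        then have E: "{Q b i..<Q b (Suc i)} \<inter> {Q b' i'..<Q b' (Suc i')} = {}"
          using \<open>b = b'\<close> by (intro ivl_disj) simp
        show ?thesis unfolding aa_def bb_def using E bik bik' by simp
      qed
    next
      case False
      have Qb: "\<forall>i<m. Q b i < Q b (Suc i)" and Qb': "\<forall>i<m. Q b' i < Q b' (Suc i)" using Qm bik bik' by simp_all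
      have "Q b (Suc i) \<le> Q b m" "Q b 0 \<le> Q b i" using mono_q[OF Qb] bik by auto
      moreover have "Q b' (Suc i') \<le> Q b' m" "Q b' 0 \<le> Q b' i'" using mono_q[OF Qb'] bik' by auto
      moreover have "Q b m \<le> Q b' 0 \<or> Q b' m \<le> Q b 0" using Qd bik bik' False by blast
      ultimately have "Q b (Suc i) \<le> Q b' i' \<or> Q b' (Suc i') \<le> Q b i" by linarith
      then have E: "{Q b i..<Q b (Suc i)} \<inter> {Q b' i'..<Q b' (Suc i')} = {}"
        by (intro ivl_disj) simp
      show ?thesis unfolding aa_def bb_def using E bik bik' by simp
    qed
  qed
  have ind: "indep_vars (\<lambda>_. count_space UNIV) X I"
    using procs_parts(4)[OF procs, rule_format, of I kk aa bb] finI Iprops Idis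
    unfolding X_def by blast
  have fin: "\<And>\<omega>. locfin n N \<omega>" using procs_basic(2)[OF procs] .
  have succ_iff: "succ n N L Q b \<omega> \<longleftrightarrow> (\<forall>j\<in>J b. X j \<omega> \<in> A j)" for b \<omega>
  proof -
    have "(\<forall>j\<in>J b. X j \<omega> \<in> A j) \<longleftrightarrow> (\<forall>i<m. \<forall>k\<le>n. X (enc b i k) \<omega> \<in> A (enc b i k))"
      unfolding J_def by auto
    also have "\<dots> \<longleftrightarrow> succ n N L Q b \<omega>"
      unfolding succ_def Lm
    proof (intro all_cong1 imp_cong refl)
      fix i k assume "i < m" "k \<le> n"
      have f: "finite (N k \<omega> \<inter> {Q b i..<Q b (Suc i)})" using locfinD[OF fin \<open>k \<le> n\<close>] .
      show "(X (enc b i k) \<omega> \<in> A (enc b i k)) = ((N k \<omega> \<inter> {Q b i..<Q b (Suc i)} \<noteq> {}) = (k = L ! i))"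
      proof (cases "k = L ! i")
        case True
        then show ?thesis unfolding X_def A_def kk_def aa_def bb_def using f by (simp add: card_gt_0_iff)
      next
        case False
        then show ?thesis unfolding X_def A_def kk_def aa_def bb_def using f by simp
      qed
    qed
    finally show ?thesis by simp
  qed
  have seteq: "{\<omega>\<in>space M. \<forall>b<K. \<not> succ n N L Q b \<omega>} = {\<omega>\<in>space M. \<forall>b<K. \<not> (\<forall>j\<in>J b. X j \<omega> \<in> A j)}"
    using succ_iff by simp
  have JI: "J b \<subseteq> I" if "b < K" for b unfolding I_def using that by blast
  have ev: "{\<omega>\<in>space M. \<forall>b<K. \<not> (\<forall>j\<in>J b. X j \<omega> \<in> A j)} \<in> events"
  proof -
    have "{\<omega>\<in>space M. \<forall>b\<in>{..<K}. \<omega> \<in> space M - {\<omega>\<in>space M. \<forall>j\<in>J b. X j \<omega> \<in> A j}} \<in> events"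
    proof (rule sets.sets_Collect_countable_All')
      fix b assume "b \<in> {..<K}"
      then have "{\<omega>\<in>space M. \<forall>j\<in>J b. X j \<omega> \<in> A j} \<in> events" using rect_event[OF ind JI] by simp
      then have "space M - {\<omega>\<in>space M. \<forall>j\<in>J b. X j \<omega> \<in> A j} \<in> events" by (rule sets.compl_sets)
      moreover have "{\<omega> \<in> space M. \<omega> \<in> space M - {\<omega>\<in>space M. \<forall>j\<in>J b. X j \<omega> \<in> A j}} = space M - {\<omega>\<in>space M. \<forall>j\<in>J b. X j \<omega> \<in> A j}" by blast
      ultimately show "{\<omega> \<in> space M. \<omega> \<in> space M - {\<omega>\<in>space M. \<forall>j\<in>J b. X j \<omega> \<in> A j}} \<in> events" by simp
    qed simp
    moreover have E: "{\<omega>\<in>space M. \<forall>b\<in>{..<K}. \<omega> \<in> space M - {\<omega>\<in>space M. \<forall>j\<in>J b. X j \<omega> \<in> A j}} = {\<omega>\<in>space M. \<forall>b<K. \<not> (\<forall>j\<in>J b. X j \<omega> \<in> A j)}"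
      by blast
    ultimately show ?thesis by (simp only: E)
  qed
  have single: "a0 \<le> prob {\<omega> \<in> space M. X j \<omega> \<in> A j}" if "j \<in> I" for j
  proof -
    obtain b i k where bik: "b < K" "i < m" "k \<le> n" "j = enc b i k" using memI \<open>j \<in> I\<close> by blast
    define mu where "mu = integral {Q b i..Q b (Suc i)} (lam k)"
    have mu: "r \<le> mu" "mu \<le> R" using Qr bik unfolding mu_def by auto
    have mupos: "0 < mu" using mu r by simp
    have le: "Q b i \<le> Q b (Suc i)" using Qm bik by (simp add: less_imp_le)
    have pe: "prob {\<omega> \<in> space M. X j \<omega> \<in> A j} = measure_pmf.prob (poisson_law mu) (A j)"
      unfolding X_def kk_def aa_def bb_def mu_def using procs_prob[OF procs bik(3) le] bik by simp
    show ?thesis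
    proof (cases "k = L ! i")
      case True
      then have "A j = {c. 0 < c}" unfolding A_def using bik by simp
      then have "prob {\<omega> \<in> space M. X j \<omega> \<in> A j} = 1 - exp (- mu)" using pe poisson_pos[OF mupos] by simp
      moreover have "exp (- mu) \<le> exp (- r)" using mu by simp
      ultimately show ?thesis unfolding a0_def by linarith
    next
      case False
      then have "A j = {0}" unfolding A_def using bik by simp
      then have "prob {\<omega> \<in> space M. X j \<omega> \<in> A j} = exp (- mu)" using pe poisson_zero[OF mupos] by simp
      moreover have "exp (- R) \<le> exp (- mu)" using mu by simp
      ultimately show ?thesis unfolding a0_def by linarith
    qed
  qed
  have cardJ: "card (J b) = m * Suc n" for b
  proof -
    have "inj_on (\<lambda>(i, k). enc b i k) ({..<m} \<times> {..n})" by (auto simp: inj_on_def)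
    then show ?thesis unfolding J_def by (simp add: card_image card_cartesian_product)
  qed
  have pb: "\<forall>b<K. a0 ^ (m * Suc n) \<le> prob {\<omega> \<in> space M. \<forall>j\<in>J b. X j \<omega> \<in> A j}"
  proof (intro allI impI)
    fix b assume b: "b < K"
    have "a0 ^ (m * Suc n) = (\<Prod>j\<in>J b. a0)" using cardJ by simp
    also have "\<dots> \<le> (\<Prod>j\<in>J b. prob {\<omega> \<in> space M. X j \<omega> \<in> A j})"
      using single JI[OF b] a0 by (intro prod_mono) auto
    also have "\<dots> = prob {\<omega> \<in> space M. \<forall>j\<in>J b. X j \<omega> \<in> A j}"
      by (rule indep_rect[OF ind JI[OF b] finJ, symmetric])
    finally show "a0 ^ (m * Suc n) \<le> prob {\<omega> \<in> space M. \<forall>j\<in>J b. X j \<omega> \<in> A j}" .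
  qed
  have disJ: "\<forall>b<K. \<forall>b'<K. b \<noteq> b' \<longrightarrow> J b \<inter> J b' = {}"
    unfolding J_def by auto
  have "prob {\<omega>\<in>space M. \<forall>b<K. \<not> (\<forall>j\<in>J b. X j \<omega> \<in> A j)} \<le> (1 - a0 ^ (m * Suc n)) ^ K"
    by (rule indep_blocks_bound[OF ind]) (use JI finJ disJ pb in auto)
  then show ?thesis unfolding a0_def[symmetric] seteq using ev by (intro conjI)
qed


lemma collapse:
  assumes fin: "locfin n N \<omega>" and sync: "\<forall>x\<in>stateX n. phi n N hi lo x \<omega> = c0"
    and le: "t0 \<le> lo" "lo \<le> hi" "hi \<le> t" and x: "x \<in> stateX n"
  shows "phi n N t t0 x \<omega> = phi n N t hi c0 \<omega>"
proof -
  have a: "t0 \<le> hi" using le by linarith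
  have e1: "phi n N t t0 x \<omega> = phi n N t hi (phi n N hi t0 x \<omega>) \<omega>"
    by (rule phi_cocycle[OF fin a le(3)])
  have e2: "phi n N hi t0 x \<omega> = phi n N hi lo (phi n N lo t0 x \<omega>) \<omega>"
    by (rule phi_cocycle[OF fin le(1,2)])
  have e3: "phi n N hi lo (phi n N lo t0 x \<omega>) \<omega> = c0" using sync phi_stateX[OF x, of N lo t0 \<omega>] by blast
  show ?thesis unfolding e1 e2 e3 ..
qed

lemma hdist_single: "hdist {c} {c} = 0"
  by (simp add: hdist_def)

lemma pb_sub_image: "t0 \<le> t \<Longrightarrow> pb_set n N t \<omega> \<subseteq> (\<lambda>x. phi n N t t0 x \<omega>) ` stateX n"
  unfolding pb_set_def by blast

lemma pb_subset: "pb_set n N t \<omega> \<subseteq> stateX n"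
proof
  fix x assume "x \<in> pb_set n N t \<omega>"
  then have "x \<in> (\<lambda>x. phi n N t t x \<omega>) ` stateX n" using pb_sub_image[of t t n N \<omega>] by blast
  then obtain y where "y \<in> stateX n" "x = phi n N t t y \<omega>" by blast
  then show "x \<in> stateX n" using phi_stateX by simp
qed

lemma pb_forward:
  assumes fin: "locfin n N \<omega>" and le: "t0 \<le> t"
  shows "(\<lambda>x. phi n N t t0 x \<omega>) ` pb_set n N t0 \<omega> \<subseteq> pb_set n N t \<omega>"
proof
  fix z assume "z \<in> (\<lambda>x. phi n N t t0 x \<omega>) ` pb_set n N t0 \<omega>"
  then obtain x where x: "x \<in> pb_set n N t0 \<omega>" "z = phi n N t t0 x \<omega>" by blast
  show "z \<in> pb_set n N t \<omega>" unfolding pb_set_def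
  proof (rule INT_I)
    fix s assume s: "s \<in> {..t}"
    show "z \<in> (\<lambda>x. phi n N t s x \<omega>) ` stateX n"
    proof (cases "s \<le> t0")
      case True
      then have "x \<in> (\<lambda>x. phi n N t0 s x \<omega>) ` stateX n" using x(1) unfolding pb_set_def by blast
      then obtain y where y: "y \<in> stateX n" "x = phi n N t0 s y \<omega>" by blast
      have "z = phi n N t s y \<omega>" using x(2) y(2) phi_cocycle[OF fin True le, of y] by simp
      then show ?thesis using y by blast
    next
      case False
      have xX: "x \<in> stateX n" using subsetD[OF pb_subset x(1)] .
      have "z = phi n N t s (phi n N s t0 x \<omega>) \<omega>"
        using x(2) phi_cocycle[OF fin, of t0 s t x] False s by simp
      then show ?thesis by (intro rev_image_eqI[OF phi_stateX[OF xX]])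
    qed
  qed
qed

lemma pull_det:
  assumes fin: "locfin n N \<omega>" and sync: "\<forall>x\<in>stateX n. phi n N hi lo x \<omega> = c0"
    and le: "lo \<le> hi" "hi \<le> t"
  shows "\<forall>t0\<le>lo. (\<lambda>x. phi n N t t0 x \<omega>) ` stateX n = {phi n N t hi c0 \<omega>}"
    and "pb_set n N t \<omega> = {phi n N t hi c0 \<omega>}"
proof -
  let ?c = "phi n N t hi c0 \<omega>"
  show all: "\<forall>t0\<le>lo. (\<lambda>x. phi n N t t0 x \<omega>) ` stateX n = {?c}"
  proof (intro allI impI)
    fix t0 assume t0: "t0 \<le> lo"
    have "\<forall>x\<in>stateX n. phi n N t t0 x \<omega> = ?c"
      using collapse[OF fin sync t0 le] by blast
    then show "(\<lambda>x. phi n N t t0 x \<omega>) ` stateX n = {?c}"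
      using stateX_ne[of n] by (auto intro: rev_image_eqI[OF stateX_ne])
  qed
  show "pb_set n N t \<omega> = {?c}"
  proof
    show "pb_set n N t \<omega> \<subseteq> {?c}" using pb_sub_image[of lo t n N \<omega>] all le by auto
  next
    show "{?c} \<subseteq> pb_set n N t \<omega>" unfolding pb_set_def
    proof (intro subsetI INT_I)
      fix z s assume z: "z \<in> {?c}" and s: "s \<in> {..t}"
      show "z \<in> (\<lambda>x. phi n N t s x \<omega>) ` stateX n"
      proof (cases "s \<le> lo")
        case True
        then show ?thesis using all z by auto
      next
        case False
        let ?y = "replicate n False"
        have "phi n N t lo ?y \<omega> = ?c" using all stateX_ne by blast
        moreover have "phi n N t lo ?y \<omega> = phi n N t s (phi n N s lo ?y \<omega>) \<omega>"
          using phi_cocycle[OF fin, of lo s t ?y] False s by simp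
        moreover have w: "phi n N s lo ?y \<omega> \<in> stateX n" by (rule phi_stateX[OF stateX_ne])
        ultimately show ?thesis using z by (intro rev_image_eqI[OF w]) simp
      qed
    qed
  qed
qed

lemma succ_sync:
  assumes fin: "locfin n N \<omega>" and m: "m = n * (n + 1) div 2"
    and Qm: "\<forall>i<m. Q b i < Q b (Suc i)" and s: "succ n N (sq n) Q b \<omega>"
  shows "\<forall>x\<in>stateX n. phi n N (Q b m) (Q b 0) x \<omega> = replicate n True"
proof
  fix x assume "x \<in> stateX n"
  then have x: "length x = n" unfolding stateX_def by simp
  have "\<forall>i<m. \<forall>k\<le>n. (N k \<omega> \<inter> {Q b i..<Q b (Suc i)} \<noteq> {}) \<longleftrightarrow> k = sq n ! i"
    using s m length_sq[of n] unfolding succ_def by simp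
  then show "phi n N (Q b m) (Q b 0) x \<omega> = replicate n True"
    by (rule block_sync[OF fin m Qm _ x])
qed

lemma sq_le: "\<forall>i<n * (n + 1) div 2. sq n ! i \<le> n"
  using set_sq[of _ n] nth_mem length_sq[of n] by (metis less_imp_le)

lemma AE_some_succ:
  assumes procs: "indep_poisson_procs M n lam N" and r: "0 < r"
    and m: "m = n * (n + 1) div 2"
    and Qm: "\<forall>b. \<forall>i<m. Q b i < Q b (Suc i)"
    and Qr: "\<forall>b. \<forall>i<m. \<forall>k\<le>n. r \<le> integral {Q b i..Q b (Suc i)} (lam k) \<and> integral {Q b i..Q b (Suc i)} (lam k) \<le> R"
    and Qd: "\<forall>b b'. b \<noteq> b' \<longrightarrow> Q b m \<le> Q b' 0 \<or> Q b' m \<le> Q b 0"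
  shows "AE \<omega> in M. \<exists>b. succ n N (sq n) Q b \<omega>"
proof -
  interpret prob_space M using procs_basic(1)[OF procs] .
  define a0 where "a0 = min (1 - exp (-r)) (exp (-R))"
  define q where "q = 1 - a0 ^ (m * Suc n)"
  have a0: "0 < a0" "a0 \<le> 1" unfolding a0_def using r by (auto simp: min_le_iff_disj)
  have q: "q < 1" unfolding q_def using a0 by simp
  have ZK: "{\<omega>\<in>space M. \<forall>b<K. \<not> succ n N (sq n) Q b \<omega>} \<in> events \<and>
      prob {\<omega>\<in>space M. \<forall>b<K. \<not> succ n N (sq n) Q b \<omega>} \<le> q ^ K" for K
    unfolding q_def a0_def
    by (rule block_bound[OF procs r]) (use m length_sq[of n] sq_le[of n] Qm Qr Qd in auto)
  let ?Z = "{\<omega>\<in>space M. \<forall>K::nat. \<forall>b<K. \<not> succ n N (sq n) Q b \<omega>}"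
  have Zev: "?Z \<in> events"
    by (rule sets.sets_Collect_countable_All[where P="\<lambda>K \<omega>. \<forall>b<K. \<not> succ n N (sq n) Q b \<omega>"]) (rule conjunct1[OF ZK])
  have Zle: "prob ?Z \<le> q ^ K" for K
  proof -
    have "prob ?Z \<le> prob {\<omega>\<in>space M. \<forall>b<K. \<not> succ n N (sq n) Q b \<omega>}"
      by (rule finite_measure_mono[OF _ conjunct1[OF ZK[of K]]]) blast
    then show ?thesis using conjunct2[OF ZK[of K]] by linarith
  qed
  have "prob ?Z = 0"
  proof (rule ccontr)
    assume "prob ?Z \<noteq> 0"
    then have "0 < prob ?Z" using measure_nonneg[of M ?Z] by linarith
    then obtain K where "q ^ K < prob ?Z" using real_arch_pow_inv[OF _ q] by blast
    then show False using Zle[of K] by linarith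
  qed
  then have "emeasure M ?Z = 0" by (simp add: emeasure_eq_measure)
  then have null: "?Z \<in> null_sets M" using Zev by (rule null_setsI)
  show ?thesis
  proof (rule AE_I'[OF null])
    show "{x \<in> space M. \<not> (\<exists>b. succ n N (sq n) Q b x)} \<subseteq> ?Z"
    proof
      fix x assume "x \<in> {x \<in> space M. \<not> (\<exists>b. succ n N (sq n) Q b x)}"
      then have "x \<in> space M" "\<forall>b. \<not> succ n N (sq n) Q b x" by auto
      then show "x \<in> ?Z" by simp
    qed
  qed
qed


lemma choose_parts:
  assumes "\<forall>t. \<exists>t0<t. joint_bounded_rates n lam r R m t0 t"
  shows "\<exists>G. \<forall>s. G s 0 < s \<and> G s m = s \<and> (\<forall>i<m. G s i < G s (Suc i)) \<and>
     (\<forall>i<m. \<forall>k\<le>n. r \<le> integral {G s i..G s (Suc i)} (lam k) \<and> integral {G s i..G s (Suc i)} (lam k) \<le> R)"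
proof -
  have "\<forall>s. \<exists>q. q 0 < s \<and> q m = s \<and> (\<forall>i<m. q i < q (Suc i)) \<and>
     (\<forall>i<m. \<forall>k\<le>n. r \<le> integral {q i..q (Suc i)} (lam k) \<and> integral {q i..q (Suc i)} (lam k) \<le> R)"
  proof
    fix s
    obtain t0 where "t0 < s" "joint_bounded_rates n lam r R m t0 s" using assms by blast
    then show "\<exists>q. q 0 < s \<and> q m = s \<and> (\<forall>i<m. q i < q (Suc i)) \<and>
     (\<forall>i<m. \<forall>k\<le>n. r \<le> integral {q i..q (Suc i)} (lam k) \<and> integral {q i..q (Suc i)} (lam k) \<le> R)"
      unfolding joint_bounded_rates_def by auto
  qed
  then show ?thesis by (rule choice)
qed

lemma choose_parts_fw:
  assumes "\<forall>\<tau>. joint_bounded_rates n lam r R m \<tau> (\<tau> + dt)"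
  shows "\<exists>H. \<forall>\<tau>. H \<tau> 0 = \<tau> \<and> H \<tau> m = \<tau> + dt \<and> (\<forall>i<m. H \<tau> i < H \<tau> (Suc i)) \<and>
     (\<forall>i<m. \<forall>k\<le>n. r \<le> integral {H \<tau> i..H \<tau> (Suc i)} (lam k) \<and> integral {H \<tau> i..H \<tau> (Suc i)} (lam k) \<le> R)"
proof -
  have "\<forall>\<tau>. \<exists>q. q 0 = \<tau> \<and> q m = \<tau> + dt \<and> (\<forall>i<m. q i < q (Suc i)) \<and>
     (\<forall>i<m. \<forall>k\<le>n. r \<le> integral {q i..q (Suc i)} (lam k) \<and> integral {q i..q (Suc i)} (lam k) \<le> R)"
    using assms unfolding joint_bounded_rates_def by blast
  then show ?thesis by (rule choice)
qed

lemma partA: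
  assumes procs: "indep_poisson_procs M n lam N"
    and m: "m = n * (n + 1) div 2"
    and r: "0 < r"
    and hyp: "\<forall>t. \<exists>t0<t. joint_bounded_rates n lam r R m t0 t"
  shows "AE \<omega> in M. (\<exists>c. pb_set n N t \<omega> = {c}) \<and>
     ((\<lambda>t0. hdist ((\<lambda>x. phi n N t t0 x \<omega>) ` stateX n) (pb_set n N t \<omega>)) \<longlongrightarrow> 0) at_bot"
proof -
  have fin: "\<And>\<omega>. locfin n N \<omega>" by (rule procs_basic(2)[OF procs])
  obtain G where G: "\<forall>s. G s 0 < s \<and> G s m = s \<and> (\<forall>i<m. G s i < G s (Suc i)) \<and>
     (\<forall>i<m. \<forall>k\<le>n. r \<le> integral {G s i..G s (Suc i)} (lam k) \<and> integral {G s i..G s (Suc i)} (lam k) \<le> R)"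
    using choose_parts[OF hyp] by blast
  define s where "s b = ((\<lambda>x. G x 0) ^^ b) t" for b
  define Q where "Q b = G (s b)" for b
  have s0: "s 0 = t" unfolding s_def by simp
  have sSuc: "s (Suc b) = Q b 0" for b unfolding s_def Q_def by simp
  have Qm_end: "Q b m = s b" for b unfolding Q_def using G by blast
  have sdec: "s (Suc b) < s b" for b unfolding sSuc Q_def using G by blast
  have decs: "decseq s" by (rule decseq_SucI) (use sdec in \<open>simp add: less_imp_le\<close>)
  have Qm: "\<forall>b. \<forall>i<m. Q b i < Q b (Suc i)" unfolding Q_def using G by blast
  have Qr: "\<forall>b. \<forall>i<m. \<forall>k\<le>n. r \<le> integral {Q b i..Q b (Suc i)} (lam k) \<and> integral {Q b i..Q b (Suc i)} (lam k) \<le> R"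
    unfolding Q_def using G by blast
  have Qd: "\<forall>b b'. b \<noteq> b' \<longrightarrow> Q b m \<le> Q b' 0 \<or> Q b' m \<le> Q b 0"
  proof (intro allI impI)
    fix b b' :: nat assume "b \<noteq> b'"
    then consider "b < b'" | "b' < b" by linarith
    then show "Q b m \<le> Q b' 0 \<or> Q b' m \<le> Q b 0"
    proof cases
      case 1
      then have "s b' \<le> s (Suc b)" using decs by (simp add: decseq_def)
      then show ?thesis unfolding Qm_end sSuc[symmetric] by simp
    next
      case 2
      then have "s b \<le> s (Suc b')" using decs by (simp add: decseq_def)
      then show ?thesis unfolding Qm_end sSuc[symmetric] by simp
    qed
  qed
  have AEs: "AE \<omega> in M. \<exists>b. succ n N (sq n) Q b \<omega>"
    by (rule AE_some_succ[OF procs r m Qm Qr Qd])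
  show ?thesis
  proof (rule eventually_mono[OF AEs])
    fix \<omega> assume "\<exists>b. succ n N (sq n) Q b \<omega>"
    then obtain b where b: "succ n N (sq n) Q b \<omega>" by blast
    have Qmb: "\<forall>i<m. Q b i < Q b (Suc i)" using Qm by blast
    have sync: "\<forall>x\<in>stateX n. phi n N (Q b m) (Q b 0) x \<omega> = replicate n True"
      by (rule succ_sync[OF fin m Qmb b])
    have le1: "Q b 0 \<le> Q b m" using sdec[of b] unfolding sSuc Qm_end by simp
    have le2: "Q b m \<le> t" using decs unfolding Qm_end s0[symmetric] by (simp add: decseq_def)
    note pd = pull_det[OF fin sync le1 le2]
    let ?c = "phi n N t (Q b m) (replicate n True) \<omega>"
    have ev: "\<forall>t0\<le>Q b 0. hdist ((\<lambda>x. phi n N t t0 x \<omega>) ` stateX n) (pb_set n N t \<omega>) = 0"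
      using pd hdist_single[of ?c] by simp
    have "((\<lambda>t0. hdist ((\<lambda>x. phi n N t t0 x \<omega>) ` stateX n) (pb_set n N t \<omega>)) \<longlongrightarrow> 0) at_bot"
      by (rule tendsto_eventually) (use ev in \<open>auto simp: eventually_at_bot_linorder\<close>)
    then show "(\<exists>c. pb_set n N t \<omega> = {c}) \<and>
     ((\<lambda>t0. hdist ((\<lambda>x. phi n N t t0 x \<omega>) ` stateX n) (pb_set n N t \<omega>)) \<longlongrightarrow> 0) at_bot"
      using pd(2) by blast
  qed
qed

lemma rif_base:
  assumes procs: "indep_poisson_procs M n lam N"
  shows "(\<forall>t \<omega>. pb_set n N t \<omega> \<subseteq> stateX n \<and> compactin (discrete_topology (stateX n)) (pb_set n N t \<omega>)) \<and>
     (\<forall>t. {(x, \<omega>). x \<in> stateX n \<and> \<omega> \<in> space M \<and> x \<in> pb_set n N t \<omega>} \<in> sets (count_space (stateX n) \<Otimes>\<^sub>M M))"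
proof (intro conjI allI)
  fix t \<omega>
  show "pb_set n N t \<omega> \<subseteq> stateX n" by (rule pb_subset)
  show "compactin (discrete_topology (stateX n)) (pb_set n N t \<omega>)"
    by (rule finite_imp_compactin) (auto intro: finite_subset[OF pb_subset finite_stateX] pb_subset[THEN subsetD])
next
  fix t
  have fin: "\<And>\<omega>. locfin n N \<omega>" by (rule procs_basic(2)[OF procs])
  have meas: "measN M n N" by (rule procs_basic(3)[OF procs])
  have eq: "{(x, \<omega>). x \<in> stateX n \<and> \<omega> \<in> space M \<and> x \<in> pb_set n N t \<omega>}
     = (\<Union>x\<in>stateX n. {x} \<times> {\<omega> \<in> space M. x \<in> pb_set n N t \<omega>})" by auto
  have "(\<Union>x\<in>stateX n. {x} \<times> {\<omega> \<in> space M. x \<in> pb_set n N t \<omega>}) \<in> sets (count_space (stateX n) \<Otimes>\<^sub>M M)"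
  proof (rule sets.finite_UN[OF finite_stateX])
    fix x assume x: "x \<in> stateX n"
    show "{x} \<times> {\<omega> \<in> space M. x \<in> pb_set n N t \<omega>} \<in> sets (count_space (stateX n) \<Otimes>\<^sub>M M)"
      by (rule pair_measureI) (use x pb_set_meas[OF fin meas] in auto)
  qed
  then show "{(x, \<omega>). x \<in> stateX n \<and> \<omega> \<in> space M \<and> x \<in> pb_set n N t \<omega>} \<in> sets (count_space (stateX n) \<Otimes>\<^sub>M M)"
    unfolding eq .
qed


lemma partB_forward:
  assumes procs: "indep_poisson_procs M n lam N"
    and m: "m = n * (n + 1) div 2"
    and r: "0 < r" and dt: "0 < dt"
    and H: "\<forall>\<tau>. H \<tau> 0 = \<tau> \<and> H \<tau> m = \<tau> + dt \<and> (\<forall>i<m. H \<tau> i < H \<tau> (Suc i)) \<and>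
     (\<forall>i<m. \<forall>k\<le>n. r \<le> integral {H \<tau> i..H \<tau> (Suc i)} (lam k) \<and> integral {H \<tau> i..H \<tau> (Suc i)} (lam k) \<le> R)"
    and AEA: "AE \<omega> in M. \<exists>c. pb_set n N t0 \<omega> = {c}"
  shows "AE \<omega> in M. ((\<lambda>t. hdist ((\<lambda>x. phi n N t t0 x \<omega>) ` stateX n) (pb_set n N t \<omega>)) \<longlongrightarrow> 0) at_top"
proof -
  have fin: "\<And>\<omega>. locfin n N \<omega>" by (rule procs_basic(2)[OF procs])
  define Q where "Q b = H (t0 + real b * dt)" for b
  have Q0: "Q b 0 = t0 + real b * dt" for b unfolding Q_def using H by blast
  have Qend: "Q b m = t0 + real b * dt + dt" for b unfolding Q_def using H by blast
  have Qm: "\<forall>b. \<forall>i<m. Q b i < Q b (Suc i)" unfolding Q_def using H by blast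
  have Qr: "\<forall>b. \<forall>i<m. \<forall>k\<le>n. r \<le> integral {Q b i..Q b (Suc i)} (lam k) \<and> integral {Q b i..Q b (Suc i)} (lam k) \<le> R"
    unfolding Q_def using H by blast
  have Qd: "\<forall>b b'. b \<noteq> b' \<longrightarrow> Q b m \<le> Q b' 0 \<or> Q b' m \<le> Q b 0"
  proof (intro allI impI)
    fix b b' :: nat assume "b \<noteq> b'"
    then consider "Suc b \<le> b'" | "Suc b' \<le> b" by linarith
    then show "Q b m \<le> Q b' 0 \<or> Q b' m \<le> Q b 0"
    proof cases
      case 1
      then have "real (Suc b) * dt \<le> real b' * dt" using dt by (intro mult_right_mono) auto
      then show ?thesis unfolding Qend Q0 by (simp add: algebra_simps)
    next
      case 2
      then have "real (Suc b') * dt \<le> real b * dt" using dt by (intro mult_right_mono) auto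
      then show ?thesis unfolding Qend Q0 by (simp add: algebra_simps)
    qed
  qed
  have AEs: "AE \<omega> in M. \<exists>b. succ n N (sq n) Q b \<omega>"
    by (rule AE_some_succ[OF procs r m Qm Qr Qd])
  show ?thesis
  proof (rule eventually_mono[OF eventually_conj[OF AEs AEA]])
    fix \<omega> assume "(\<exists>b. succ n N (sq n) Q b \<omega>) \<and> (\<exists>c. pb_set n N t0 \<omega> = {c})"
    then obtain b c0 where b: "succ n N (sq n) Q b \<omega>" and c0: "pb_set n N t0 \<omega> = {c0}" by blast
    have Qmb: "\<forall>i<m. Q b i < Q b (Suc i)" using Qm by blast
    have sync: "\<forall>x\<in>stateX n. phi n N (Q b m) (Q b 0) x \<omega> = replicate n True"
      by (rule succ_sync[OF fin m Qmb b])
    have le0: "t0 \<le> Q b 0" unfolding Q0 using dt by simp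
    have le1: "Q b 0 \<le> Q b m" unfolding Q0 Qend using dt by simp
    have ev: "hdist ((\<lambda>x. phi n N t t0 x \<omega>) ` stateX n) (pb_set n N t \<omega>) = 0" if t: "Q b m \<le> t" for t
    proof -
      let ?c = "phi n N t (Q b m) (replicate n True) \<omega>"
      have all: "\<forall>x\<in>stateX n. phi n N t t0 x \<omega> = ?c"
        using collapse[OF fin sync le0 le1 t] by blast
      have img: "(\<lambda>x. phi n N t t0 x \<omega>) ` stateX n = {?c}"
        using all by (auto intro: rev_image_eqI[OF stateX_ne])
      have t0t: "t0 \<le> t" using le0 le1 t by linarith
      have sub: "pb_set n N t \<omega> \<subseteq> {?c}" using pb_sub_image[OF t0t, of n N \<omega>] img by simp
      have "phi n N t t0 c0 \<omega> \<in> pb_set n N t \<omega>"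
        using pb_forward[OF fin t0t] c0 by blast
      then have "pb_set n N t \<omega> \<noteq> {}" by auto
      then have "pb_set n N t \<omega> = {?c}" using subset_singletonD[OF sub] by simp
      then show ?thesis using img hdist_single[of ?c] by simp
    qed
    show "((\<lambda>t. hdist ((\<lambda>x. phi n N t t0 x \<omega>) ` stateX n) (pb_set n N t \<omega>)) \<longlongrightarrow> 0) at_top"
      by (rule tendsto_eventually) (use ev in \<open>auto simp: eventually_at_top_linorder\<close>)
  qed
qed

lemma exp_bound:
  fixes q dt x :: real
  assumes q: "0 < q" "q < 1" and dt: "0 < dt" and x: "0 \<le> x"
  shows "q ^ nat \<lfloor>x / dt\<rfloor> \<le> (1 / q) * exp (- (- ln q / dt) * x)"
proof -
  let ?K = "nat \<lfloor>x / dt\<rfloor>"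
  have nn: "0 \<le> \<lfloor>x / dt\<rfloor>" using x dt by simp
  have K: "x / dt - 1 \<le> real ?K"
    using nn real_of_int_floor_gt_diff_one[of "x / dt"] by simp
  have lnq: "ln q < 0" using q by simp
  have "q ^ ?K = exp (ln (q ^ ?K))" using q by simp
  also have "\<dots> = exp (real ?K * ln q)" using q by (simp add: ln_realpow)
  also have "\<dots> \<le> exp ((x / dt - 1) * ln q)"
    using mult_right_mono_neg[OF K, of "ln q"] lnq by simp
  also have "(x / dt - 1) * ln q = (- ln q) + (- (- ln q / dt) * x)"
    using dt by (simp add: field_simps)
  also have "exp ((- ln q) + (- (- ln q / dt) * x)) = (1 / q) * exp (- (- ln q / dt) * x)"
  proof -
    have e: "exp (- ln q) = 1 / q" using q by (simp add: exp_minus inverse_eq_divide)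
    show ?thesis by (simp only: exp_add e)
  qed
  finally show ?thesis .
qed

lemma partB_exp:
  assumes procs: "indep_poisson_procs M n lam N"
    and m: "m = n * (n + 1) div 2"
    and r: "0 < r" and dt: "0 < dt"
    and H: "\<forall>\<tau>. H \<tau> 0 = \<tau> \<and> H \<tau> m = \<tau> + dt \<and> (\<forall>i<m. H \<tau> i < H \<tau> (Suc i)) \<and>
     (\<forall>i<m. \<forall>k\<le>n. r \<le> integral {H \<tau> i..H \<tau> (Suc i)} (lam k) \<and> integral {H \<tau> i..H \<tau> (Suc i)} (lam k) \<le> R)"
  shows "\<exists>C c. 0 < c \<and> (\<forall>t0\<le>t. 1 - measure M (Gamma M n N t t0) \<le> C * exp (- c * (t - t0)))"
proof -
  interpret prob_space M by (rule procs_basic(1)[OF procs])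
  have fin: "\<And>\<omega>. locfin n N \<omega>" by (rule procs_basic(2)[OF procs])
  have meas: "measN M n N" by (rule procs_basic(3)[OF procs])
  define a0 where "a0 = min (1 - exp (-r)) (exp (-R))"
  define q0 where "q0 = 1 - a0 ^ (m * Suc n)"
  define q where "q = max q0 (1/2)"
  have a0: "0 < a0" "a0 \<le> 1" unfolding a0_def using r by (auto simp: min_le_iff_disj)
  have q0: "0 \<le> q0" "q0 < 1" unfolding q0_def using a0 by (auto simp: power_le_one)
  have q: "0 < q" "q < 1" "q0 \<le> q" unfolding q_def using q0 by auto
  define c where "c = - ln q / dt"
  have lnq: "ln q < 0" using q by simp
  have c: "0 < c" unfolding c_def using lnq dt by (simp add: divide_neg_pos)
  have main: "\<forall>t0\<le>t. 1 - measure M (Gamma M n N t t0) \<le> 1 / q * exp (- c * (t - t0))"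
  proof (intro allI impI)
    fix t0 assume t0: "t0 \<le> t"
    define K where "K = nat \<lfloor>(t - t0) / dt\<rfloor>"
    have Kle: "real K * dt \<le> t - t0"
    proof -
      have "real K \<le> (t - t0) / dt" unfolding K_def using t0 dt by simp
      then show ?thesis using dt by (simp add: field_simps)
    qed
    define Q where "Q b = H (t - real (Suc b) * dt)" for b
    have Q0: "Q b 0 = t - real (Suc b) * dt" for b unfolding Q_def using H by blast
    have Qend: "Q b m = t - real b * dt" for b
    proof -
      have "Q b m = t - real (Suc b) * dt + dt" unfolding Q_def using H by blast
      then show ?thesis by (simp add: algebra_simps)
    qed
    have Qm: "\<forall>b. \<forall>i<m. Q b i < Q b (Suc i)" unfolding Q_def using H by blast
    have Qr: "\<forall>b<K. \<forall>i<m. \<forall>k\<le>n. r \<le> integral {Q b i..Q b (Suc i)} (lam k) \<and> integral {Q b i..Q b (Suc i)} (lam k) \<le> R"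
      unfolding Q_def using H by blast
    have Qd: "\<forall>b<K. \<forall>b'<K. b \<noteq> b' \<longrightarrow> Q b m \<le> Q b' 0 \<or> Q b' m \<le> Q b 0"
    proof (intro allI impI)
      fix b b' :: nat assume "b \<noteq> b'"
      then consider "Suc b \<le> b'" | "Suc b' \<le> b" by linarith
      then show "Q b m \<le> Q b' 0 \<or> Q b' m \<le> Q b 0"
      proof cases
        case 1
        then have "real (Suc b) * dt \<le> real b' * dt" using dt by (intro mult_right_mono) auto
        then show ?thesis unfolding Qend Q0 by simp
      next
        case 2
        then have "real (Suc b') * dt \<le> real b * dt" using dt by (intro mult_right_mono) auto
        then show ?thesis unfolding Qend Q0 by simp
      qed
    qed
    have QmK: "\<forall>b<K. \<forall>i<m. Q b i < Q b (Suc i)" using Qm by blast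
    have bb: "{\<omega>\<in>space M. \<forall>b<K. \<not> succ n N (sq n) Q b \<omega>} \<in> sets M \<and>
         measure M {\<omega>\<in>space M. \<forall>b<K. \<not> succ n N (sq n) Q b \<omega>} \<le> q0 ^ K"
      unfolding q0_def a0_def
      by (rule block_bound[OF procs r _ _ QmK Qr Qd]) (use m length_sq[of n] sq_le[of n] in auto)
    have Gev: "Gamma M n N t t0 \<in> sets M" by (rule Gamma_meas[OF fin meas])
    have sub: "space M - Gamma M n N t t0 \<subseteq> {\<omega>\<in>space M. \<forall>b<K. \<not> succ n N (sq n) Q b \<omega>}"
    proof
      fix \<omega> assume w: "\<omega> \<in> space M - Gamma M n N t t0"
      have "\<not> succ n N (sq n) Q b \<omega>" if b: "b < K" for b
      proof
        assume s: "succ n N (sq n) Q b \<omega>"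
        have Qmb: "\<forall>i<m. Q b i < Q b (Suc i)" using Qm by blast
        have sync: "\<forall>x\<in>stateX n. phi n N (Q b m) (Q b 0) x \<omega> = replicate n True"
          by (rule succ_sync[OF fin m Qmb s])
        have "real (Suc b) * dt \<le> real K * dt" using b dt by (intro mult_right_mono) auto
        then have le0: "t0 \<le> Q b 0" unfolding Q0 using Kle by linarith
        have le1: "Q b 0 \<le> Q b m" unfolding Q0 Qend using dt by (simp add: algebra_simps)
        have le2: "Q b m \<le> t" unfolding Qend using dt by simp
        have "\<forall>x\<in>stateX n. phi n N t t0 x \<omega> = phi n N t (Q b m) (replicate n True) \<omega>"
          using collapse[OF fin sync le0 le1 le2] by blast
        then have "\<omega> \<in> Gamma M n N t t0" using w unfolding Gamma_def by auto
        then show False using w by blast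
      qed
      then show "\<omega> \<in> {\<omega>\<in>space M. \<forall>b<K. \<not> succ n N (sq n) Q b \<omega>}" using w by blast
    qed
    have "1 - measure M (Gamma M n N t t0) = measure M (space M - Gamma M n N t t0)"
      using prob_compl[OF Gev] by simp
    also have "\<dots> \<le> measure M {\<omega>\<in>space M. \<forall>b<K. \<not> succ n N (sq n) Q b \<omega>}"
      by (rule finite_measure_mono[OF sub conjunct1[OF bb]])
    also have "\<dots> \<le> q0 ^ K" using conjunct2[OF bb] .
    also have "\<dots> \<le> q ^ K" using q0 q by (intro power_mono) auto
    also have "\<dots> \<le> (1 / q) * exp (- (- ln q / dt) * (t - t0))"
      unfolding K_def by (rule exp_bound[OF q(1,2) dt]) (use t0 in simp)
    finally have "1 - measure M (Gamma M n N t t0) \<le> (1 / q) * exp (- (- ln q / dt) * (t - t0))" .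
    then show "1 - measure M (Gamma M n N t t0) \<le> 1 / q * exp (- c * (t - t0))"
      by (simp add: c_def)
  qed
  show ?thesis using main c by blast
qed

lemma lim_from_bound:
  fixes f :: "real \<Rightarrow> real"
  assumes c: "0 < c" and b: "\<forall>t0\<le>t. 1 - f t0 \<le> C * exp (- c * (t - t0))" and f1: "\<forall>t0. f t0 \<le> 1"
  shows "(f \<longlongrightarrow> 1) at_bot"
proof (rule tendsto_sandwich[of "\<lambda>t0. 1 - C * exp (- c * (t - t0))" f at_bot "\<lambda>_. 1" 1])
  show "\<forall>\<^sub>F t0 in at_bot. 1 - C * exp (- c * (t - t0)) \<le> f t0"
    unfolding eventually_at_bot_linorder using b by (intro exI[of _ t]) (auto simp: algebra_simps)
  show "\<forall>\<^sub>F t0 in at_bot. f t0 \<le> 1" using f1 by simp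
  show "((\<lambda>_. 1) \<longlongrightarrow> (1::real)) at_bot" by simp
  have l1: "filterlim (\<lambda>x. c * x) at_bot at_bot"
    using filterlim_tendsto_pos_mult_at_bot[OF tendsto_const c filterlim_ident] by simp
  have l2: "((\<lambda>x. exp (c * x)) \<longlongrightarrow> 0) at_bot"
    by (rule filterlim_compose[OF exp_at_bot l1])
  have l3: "((\<lambda>x. C * exp (- c * t) * exp (c * x)) \<longlongrightarrow> C * exp (- c * t) * 0) at_bot"
    by (rule tendsto_mult[OF tendsto_const l2])
  have eq: "C * exp (- c * (t - x)) = C * exp (- c * t) * exp (c * x)" for x
    by (simp add: exp_add[symmetric] algebra_simps)
  have "((\<lambda>x. 1 - C * exp (- c * t) * exp (c * x)) \<longlongrightarrow> 1 - C * exp (- c * t) * 0) at_bot"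
    by (rule tendsto_diff[OF tendsto_const l3])
  then show "((\<lambda>t0. 1 - C * exp (- c * (t - t0))) \<longlongrightarrow> 1) at_bot" unfolding eq by simp
qed


theorem theorem14:
  fixes M :: "'w measure" and n :: nat
    and lam :: "nat \<Rightarrow> real \<Rightarrow> real" and N :: "nat \<Rightarrow> 'w \<Rightarrow> real set"
  assumes rates: "admissible_rates n lam"
    and procs: "indep_poisson_procs M n lam N"
  shows
   "((\<exists>r R. 0 < r \<and> r < R \<and>
        (\<forall>t. \<exists>t0<t. joint_bounded_rates n lam r R (n * (n + 1) div 2) t0 t))
     \<longrightarrow> global_pullback_attractor (stateX n) (phi n N) M (pb_set n N) \<and>
         (\<forall>t. AE \<omega> in M. \<exists>x. pb_set n N t \<omega> = {x}))
    \<and>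
    ((\<exists>r R. 0 < r \<and> r < R \<and>
        (\<forall>t. \<exists>t0<t. joint_bounded_rates n lam r R (n * (n + 1) div 2) t0 t)) \<and>
     (\<exists>r R dt. 0 < r \<and> r < R \<and> 0 < dt \<and>
        (\<forall>\<tau>. joint_bounded_rates n lam r R (n * (n + 1) div 2) \<tau> (\<tau> + dt)))
     \<longrightarrow> global_forward_attractor (stateX n) (phi n N) M (pb_set n N) \<and>
         (\<forall>t. ((\<lambda>t0. measure M (Gamma M n N t t0)) \<longlongrightarrow> 1) at_bot \<and>
              (\<exists>C c. 0 < c \<and> (\<forall>t0\<le>t. 1 - measure M (Gamma M n N t t0) \<le> C * exp (- c * (t - t0))))))"
proof -
  interpret prob_space M by (rule procs_basic(1)[OF procs])
  have fin: "\<And>\<omega>. locfin n N \<omega>" by (rule procs_basic(2)[OF procs])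
  have base: "(\<forall>t \<omega>. pb_set n N t \<omega> \<subseteq> stateX n \<and> compactin (discrete_topology (stateX n)) (pb_set n N t \<omega>)) \<and>
     (\<forall>t. {(x, \<omega>). x \<in> stateX n \<and> \<omega> \<in> space M \<and> x \<in> pb_set n N t \<omega>} \<in> sets (count_space (stateX n) \<Otimes>\<^sub>M M))"
    by (rule rif_base[OF procs])
  have rif: "random_invariant_family (stateX n) (phi n N) M (pb_set n N)"
    if sing: "\<forall>t. AE \<omega> in M. \<exists>c. pb_set n N t \<omega> = {c}"
  proof -
    have inv: "\<forall>t0 t. t0 \<le> t \<longrightarrow> (AE \<omega> in M. (\<lambda>x. phi n N t t0 x \<omega>) ` pb_set n N t0 \<omega> = pb_set n N t \<omega>)"
    proof (intro allI impI)
      fix t0 t :: real assume le: "t0 \<le> t"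
      have s0: "AE \<omega> in M. \<exists>c. pb_set n N t0 \<omega> = {c}" using sing by blast
      have s1: "AE \<omega> in M. \<exists>c. pb_set n N t \<omega> = {c}" using sing by blast
      show "AE \<omega> in M. (\<lambda>x. phi n N t t0 x \<omega>) ` pb_set n N t0 \<omega> = pb_set n N t \<omega>"
      proof (rule eventually_mono[OF eventually_conj[OF s0 s1]])
        fix \<omega> assume "(\<exists>c. pb_set n N t0 \<omega> = {c}) \<and> (\<exists>c. pb_set n N t \<omega> = {c})"
        then obtain a c where a: "pb_set n N t0 \<omega> = {a}" and c: "pb_set n N t \<omega> = {c}" by blast
        have "(\<lambda>x. phi n N t t0 x \<omega>) ` pb_set n N t0 \<omega> \<subseteq> pb_set n N t \<omega>"
          by (rule pb_forward[OF fin le])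
        then have "phi n N t t0 a \<omega> = c" using a c by simp
        then show "(\<lambda>x. phi n N t t0 x \<omega>) ` pb_set n N t0 \<omega> = pb_set n N t \<omega>" using a c by simp
      qed
    qed
    show ?thesis unfolding random_invariant_family_def using base inv by blast
  qed
  have pA: "\<forall>t. AE \<omega> in M. (\<exists>c. pb_set n N t \<omega> = {c}) \<and>
     ((\<lambda>t0. hdist ((\<lambda>x. phi n N t t0 x \<omega>) ` stateX n) (pb_set n N t \<omega>)) \<longlongrightarrow> 0) at_bot"
    if hA: "\<exists>r R. 0 < r \<and> r < R \<and> (\<forall>t. \<exists>t0<t. joint_bounded_rates n lam r R (n * (n + 1) div 2) t0 t)"
  proof -
    from hA obtain r R where r: "0 < r" and h: "\<forall>t. \<exists>t0<t. joint_bounded_rates n lam r R (n * (n + 1) div 2) t0 t"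
      by blast
    show ?thesis by (intro allI partA[OF procs refl r h])
  qed
  have sing: "\<forall>t. AE \<omega> in M. \<exists>c. pb_set n N t \<omega> = {c}"
    if hA: "\<exists>r R. 0 < r \<and> r < R \<and> (\<forall>t. \<exists>t0<t. joint_bounded_rates n lam r R (n * (n + 1) div 2) t0 t)"
  proof
    fix t
    show "AE \<omega> in M. \<exists>c. pb_set n N t \<omega> = {c}"
      by (rule eventually_mono[OF pA[OF hA, rule_format, of t]]) blast
  qed
  show ?thesis
  proof (intro conjI impI)
    assume hA: "\<exists>r R. 0 < r \<and> r < R \<and> (\<forall>t. \<exists>t0<t. joint_bounded_rates n lam r R (n * (n + 1) div 2) t0 t)"
    have conv: "\<forall>t. AE \<omega> in M. ((\<lambda>t0. hdist ((\<lambda>x. phi n N t t0 x \<omega>) ` stateX n) (pb_set n N t \<omega>)) \<longlongrightarrow> 0) at_bot"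
    proof
      fix t
      show "AE \<omega> in M. ((\<lambda>t0. hdist ((\<lambda>x. phi n N t t0 x \<omega>) ` stateX n) (pb_set n N t \<omega>)) \<longlongrightarrow> 0) at_bot"
        by (rule eventually_mono[OF pA[OF hA, rule_format, of t]]) blast
    qed
    show "global_pullback_attractor (stateX n) (phi n N) M (pb_set n N)"
      unfolding global_pullback_attractor_def using rif[OF sing[OF hA]] conv by blast
    show "\<forall>t. AE \<omega> in M. \<exists>x. pb_set n N t \<omega> = {x}" by (rule sing[OF hA])
  next
    assume hB: "(\<exists>r R. 0 < r \<and> r < R \<and> (\<forall>t. \<exists>t0<t. joint_bounded_rates n lam r R (n * (n + 1) div 2) t0 t)) \<and>
     (\<exists>r R dt. 0 < r \<and> r < R \<and> 0 < dt \<and> (\<forall>\<tau>. joint_bounded_rates n lam r R (n * (n + 1) div 2) \<tau> (\<tau> + dt)))"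
    then have hA: "\<exists>r R. 0 < r \<and> r < R \<and> (\<forall>t. \<exists>t0<t. joint_bounded_rates n lam r R (n * (n + 1) div 2) t0 t)"
      by (rule conjunct1)
    from hB obtain r R dt where r: "0 < r" and dt: "0 < dt"
      and jb: "\<forall>\<tau>. joint_bounded_rates n lam r R (n * (n + 1) div 2) \<tau> (\<tau> + dt)" by blast
    obtain H where H: "\<forall>\<tau>. H \<tau> 0 = \<tau> \<and> H \<tau> (n * (n + 1) div 2) = \<tau> + dt \<and>
       (\<forall>i<n * (n + 1) div 2. H \<tau> i < H \<tau> (Suc i)) \<and>
       (\<forall>i<n * (n + 1) div 2. \<forall>k\<le>n. r \<le> integral {H \<tau> i..H \<tau> (Suc i)} (lam k) \<and> integral {H \<tau> i..H \<tau> (Suc i)} (lam k) \<le> R)"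
      using choose_parts_fw[OF jb] by blast
    have fw: "\<forall>t0. AE \<omega> in M. ((\<lambda>t. hdist ((\<lambda>x. phi n N t t0 x \<omega>) ` stateX n) (pb_set n N t \<omega>)) \<longlongrightarrow> 0) at_top"
    proof
      fix t0
      show "AE \<omega> in M. ((\<lambda>t. hdist ((\<lambda>x. phi n N t t0 x \<omega>) ` stateX n) (pb_set n N t \<omega>)) \<longlongrightarrow> 0) at_top"
        by (rule partB_forward[OF procs refl r dt H]) (use sing[OF hA] in blast)
    qed
    show "global_forward_attractor (stateX n) (phi n N) M (pb_set n N)"
      unfolding global_forward_attractor_def using rif[OF sing[OF hA]] fw by blast
    show "\<forall>t. ((\<lambda>t0. measure M (Gamma M n N t t0)) \<longlongrightarrow> 1) at_bot \<and>
              (\<exists>C c. 0 < c \<and> (\<forall>t0\<le>t. 1 - measure M (Gamma M n N t t0) \<le> C * exp (- c * (t - t0))))"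
    proof
      fix t
      have ex: "\<exists>C c. 0 < c \<and> (\<forall>t0\<le>t. 1 - measure M (Gamma M n N t t0) \<le> C * exp (- c * (t - t0)))"
        by (rule partB_exp[OF procs refl r dt H])
      then obtain C c where c: "0 < c" and b: "\<forall>t0\<le>t. 1 - measure M (Gamma M n N t t0) \<le> C * exp (- c * (t - t0))"
        by blast
      have f1: "\<forall>t0. measure M (Gamma M n N t t0) \<le> 1" by (simp add: prob_le_1)
      have "((\<lambda>t0. measure M (Gamma M n N t t0)) \<longlongrightarrow> 1) at_bot"
        by (rule lim_from_bound[OF c b f1])
      then show "((\<lambda>t0. measure M (Gamma M n N t t0)) \<longlongrightarrow> 1) at_bot \<and>
              (\<exists>C c. 0 < c \<and> (\<forall>t0\<le>t. 1 - measure M (Gamma M n N t t0) \<le> C * exp (- c * (t - t0))))"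
        using ex by blast
    qed
  qed
qed


end
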